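(* Let $x,y$ satisfy $x+y=u_3+u_4$ and $xy=u_1u_2$. Then for every $n\ge0$, $$P_n(u_1,u_2,u_3,u_4\mid\alpha,\beta)=\sum_{k=0}^n\binom nk A_k\Bigl(x,y\,\Big|\,\frac{\alpha+\beta}{2},\frac{\alpha+\beta}{2}\Bigr)\frac{(\beta-\alpha)^{n-k}(u_3-u_4)^{n-k}}{2^{n-k}}.$$
   Context: For $\sigma=\sigma_1\cdots\sigma_m\in\mathfrak S_m$: ${\rm asc}(\sigma)$, ${\rm des}(\sigma)$ are the numbers of $i\in[m-1]$ with $\sigma_i<\sigma_{i+1}$, resp. $\sigma_i>\sigma_{i+1}$; ${\rm LRmax}(\sigma)$ is the number of $i$ with $\sigma_j<\sigma_i$ for all $j<i$; ${\rm RLmax}(\sigma)$ is the number of $i$ with $\sigma_j<\sigma_i$ for all $j>i$. With the convention $\sigma_0=\sigma_{m+1}=0$: ${\rm W}(\sigma)$ is the number of $i\in[m]$ with $\sigma_{i-1}<\sigma_i>\sigma_{i+1}$; ${\rm V}(\sigma)$ is the number of $i$ with $1<i<m$ and $\sigma_{i-1}>\sigma_i<\sigma_{i+1}$; ${\rm rdd}(\sigma)$ is the number of $i$ with $1<i\le m$ and $\sigma_{i-1}>\sigma_i>\sigma_{i+1}$; ${\rm lda}(\sigma)$ is the number of $i$ with $1\le i<m$ and $\sigma_{i-1}<\sigma_i<\sigma_{i+1}$. Define $$P_n(u_1,u_2,u_3,u_4\mid\alpha,\beta)=\sum_{\sigma\in\mathfrak S_{n+1}}u_1^{{\rm V}(\sigma)}u_2^{{\rm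 W}(\sigma)-1}u_3^{{\rm rdd}(\sigma)}u_4^{{\rm lda}(\sigma)}\alpha^{{\rm LRmax}(\sigma)-1}\beta^{{\rm RLmax}(\sigma)-1},$$ and the $(\alpha,\beta)$-Eulerian polynomials $A_n(x,y\mid\alpha,\beta)=\sum_{\sigma\in\mathfrak S_{n+1}}x^{{\rm asc}(\sigma)}y^{{\rm des}(\sigma)}\alpha^{{\rm LRmax}(\sigma)-1}\beta^{{\rm RLmax}(\sigma)-1}$ for $n\ge0$ (so $A_0=1$). Here $A_k(x,y\mid\gamma,\gamma)$ is symmetric in $x,y$. *)

theory Defs
  imports Complex_Main
begin

definition perms :: "nat \<Rightarrow> nat list set" where
  "perms m = {xs. distinct xs \<and> set xs = {1..m}}"

text \<open>1-based entry with the convention sigma_0 = sigma_(m+1) = 0.\<close>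
definition ent :: "nat list \<Rightarrow> nat \<Rightarrow> nat" where
  "ent s i = (if 1 \<le> i \<and> i \<le> length s then s ! (i - 1) else 0)"

definition asc :: "nat list \<Rightarrow> nat" where
  "asc s = card {i \<in> {1..<length s}. ent s i < ent s (i+1)}"

definition des :: "nat list \<Rightarrow> nat" where
  "des s = card {i \<in> {1..<length s}. ent s i > ent s (i+1)}"

definition LRmax :: "nat list \<Rightarrow> nat" where
  "LRmax s = card {i \<in> {1..length s}. \<forall>j \<in> {1..<i}. ent s j < ent s i}"

definition RLmax :: "nat list \<Rightarrow> nat" where
  "RLmax s = card {i \<in> {1..length s}. \<forall>j \<in> {i<..length s}. ent s j < ent s i}"

definition Wst :: "nat list \<Rightarrow> nat" where
  "Wst s = card {i \<in> {1..length s}. ent s (i-1) < ent s i \<and> ent s i > ent s (i+1)}"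

definition Vst :: "nat list \<Rightarrow> nat" where
  "Vst s = card {i \<in> {1<..<length s}. ent s (i-1) > ent s i \<and> ent s i < ent s (i+1)}"

definition rdd :: "nat list \<Rightarrow> nat" where
  "rdd s = card {i \<in> {1<..length s}. ent s (i-1) > ent s i \<and> ent s i > ent s (i+1)}"

definition lda :: "nat list \<Rightarrow> nat" where
  "lda s = card {i \<in> {1..<length s}. ent s (i-1) < ent s i \<and> ent s i < ent s (i+1)}"

definition Ppoly :: "nat \<Rightarrow> 'a::comm_ring_1 \<Rightarrow> 'a \<Rightarrow> 'a \<Rightarrow> 'a \<Rightarrow> 'a \<Rightarrow> 'a \<Rightarrow> 'a" where
  "Ppoly n u1 u2 u3 u4 \<alpha> \<beta> = (\<Sum>s\<in>perms (n+1).
      u1 ^ Vst s * u2 ^ (Wst s - 1) * u3 ^ rdd s * u4 ^ lda s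
      * \<alpha> ^ (LRmax s - 1) * \<beta> ^ (RLmax s - 1))"

definition Apoly :: "nat \<Rightarrow> 'a::comm_ring_1 \<Rightarrow> 'a \<Rightarrow> 'a \<Rightarrow> 'a \<Rightarrow> 'a" where
  "Apoly n x y \<alpha> \<beta> = (\<Sum>s\<in>perms (n+1).
      x ^ asc s * y ^ des s * \<alpha> ^ (LRmax s - 1) * \<beta> ^ (RLmax s - 1))"

end

theory Submission
  imports Defs
begin


definition S4 :: "'a::comm_ring_1 \<Rightarrow> 'a \<Rightarrow> (nat \<Rightarrow> nat \<Rightarrow> nat \<Rightarrow> nat \<Rightarrow> 'a) \<Rightarrow> nat \<Rightarrow> nat \<Rightarrow> nat \<Rightarrow> nat \<Rightarrow> 'a" where
  "S4 a b g v w l r = a * g v w (Suc l) r + b * g v w l (Suc r)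
     + of_nat v * g v w l (Suc r) + of_nat l * g (Suc v) (Suc w) (l - 1) r
     + of_nat v * g v w (Suc l) r + of_nat r * g (Suc v) (Suc w) l (r - 1)"

definition Kop :: "(nat \<Rightarrow> nat \<Rightarrow> nat \<Rightarrow> nat \<Rightarrow> 'a::comm_ring_1) \<Rightarrow> nat \<Rightarrow> nat \<Rightarrow> nat \<Rightarrow> nat \<Rightarrow> 'a" where
  "Kop g v w l r = g v w l (Suc r) - g v w (Suc l) r"

lemma Kop_S4: "Kop (S4 c c g) = S4 c c (Kop g)"
proof (intro ext)
  fix v w l r
  show "Kop (S4 c c g) v w l r = S4 c c (Kop g) v w l r"
  proof (cases l)
    case 0
    then show ?thesis
    proof (cases r)
      case 0
      then show ?thesis using \<open>l = 0\<close> by (simp add: Kop_def S4_def algebra_simps)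
    next
      case (Suc r')
      then show ?thesis using \<open>l = 0\<close> by (simp add: Kop_def S4_def algebra_simps)
    qed
  next
    case (Suc l')
    then show ?thesis
    proof (cases r)
      case 0
      then show ?thesis using \<open>l = Suc l'\<close> by (simp add: Kop_def S4_def algebra_simps)
    next
      case (Suc r')
      then show ?thesis using \<open>l = Suc l'\<close> by (simp add: Kop_def S4_def algebra_simps)
    qed
  qed
qed

lemma S4_split: "S4 (c - d) (c + d) g v w l r = S4 c c g v w l r + d * Kop g v w l r"
  by (simp add: S4_def Kop_def algebra_simps)

lemma S4_lin: "S4 a b (\<lambda>v w l r. \<Sum>k\<in>A. f k v w l r) = (\<lambda>v w l r. \<Sum>k\<in>A. S4 a b (f k) v w l r)"
  by (intro ext) (simp add: S4_def sum.distrib sum_distrib_left)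

lemma S4_scale: "S4 a b (\<lambda>v w l r. e * g v w l r) = (\<lambda>v w l r. e * S4 a b g v w l r)"
  by (intro ext) (simp add: S4_def algebra_simps)

lemma Kop_lin: "Kop (\<lambda>v w l r. \<Sum>k\<in>A. f k v w l r) v w l r = (\<Sum>k\<in>A. Kop (f k) v w l r)"
  by (simp add: Kop_def sum_subtractf)

lemma Kop_scale: "Kop (\<lambda>v w l r. e * g v w l r) = (\<lambda>v w l r. e * Kop g v w l r)"
  by (intro ext) (simp add: Kop_def algebra_simps)

lemma Kop_pow:
  assumes "Kop g = (\<lambda>v w l r. e * g v w l r)"
  shows "Kop ((S4 c c ^^ k) g) = (\<lambda>v w l r. e * (S4 c c ^^ k) g v w l r)"
proof (induction k)
  case 0 then show ?case using assms by simp
next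
  case (Suc k)
  then show ?case by (simp add: Kop_S4 S4_scale)
qed

lemma partI:
  assumes "Kop g = (\<lambda>v w l r. e * g v w l r)"
  shows "(S4 (c - d) (c + d) ^^ n) g =
     (\<lambda>v w l r. \<Sum>k\<le>n. of_nat (n choose k) * (d * e) ^ (n - k) * (S4 c c ^^ k) g v w l r)"
proof (induction n)
  case 0 then show ?case by simp
next
  case (Suc n)
  define G where "G k = (S4 c c ^^ k) g" for k
  have KG: "Kop (G k) v w l r = e * G k v w l r" for k v w l r
    using Kop_pow[OF assms, where c=c and k=k] unfolding G_def by meson
  have "(S4 (c - d) (c + d) ^^ Suc n) g = S4 (c - d) (c + d) ((S4 (c - d) (c + d) ^^ n) g)" by simp
  also have "\<dots> = (\<lambda>v w l r. S4 c c (\<lambda>v w l r. \<Sum>k\<le>n. of_nat (n choose k) * (d * e) ^ (n - k) * G k v w l r) v w l r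
        + d * Kop (\<lambda>v w l r. \<Sum>k\<le>n. of_nat (n choose k) * (d * e) ^ (n - k) * G k v w l r) v w l r)"
    unfolding Suc G_def by (intro ext) (simp add: S4_split)
  also have "\<dots> = (\<lambda>v w l r. (\<Sum>k\<le>n. of_nat (n choose k) * (d * e) ^ (n - k) * G (Suc k) v w l r)
        + (\<Sum>k\<le>n. of_nat (n choose k) * (d * e) ^ (Suc n - k) * G k v w l r))"
  proof (intro ext)
    fix v w l r
    have 1: "S4 c c (\<lambda>v w l r. \<Sum>k\<le>n. of_nat (n choose k) * (d * e) ^ (n - k) * G k v w l r) v w l r
       = (\<Sum>k\<le>n. of_nat (n choose k) * (d * e) ^ (n - k) * G (Suc k) v w l r)"
      unfolding S4_lin
      by (intro sum.cong refl) (simp add: S4_def G_def algebra_simps)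
    have 2: "d * Kop (\<lambda>v w l r. \<Sum>k\<le>n. of_nat (n choose k) * (d * e) ^ (n - k) * G k v w l r) v w l r
       = (\<Sum>k\<le>n. of_nat (n choose k) * (d * e) ^ (Suc n - k) * G k v w l r)"
      unfolding Kop_lin sum_distrib_left
    proof (intro sum.cong refl)
      fix k assume "k \<in> {..n}"
      then have "Suc n - k = Suc (n - k)" by auto
      then show "d * Kop (\<lambda>v w l r. of_nat (n choose k) * (d * e) ^ (n - k) * G k v w l r) v w l r =
         of_nat (n choose k) * (d * e) ^ (Suc n - k) * G k v w l r"
        using KG[of k v w l r] by (simp add: Kop_def algebra_simps)
    qed
    show "S4 c c (\<lambda>v w l r. \<Sum>k\<le>n. of_nat (n choose k) * (d * e) ^ (n - k) * G k v w l r) v w l r +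
         d * Kop (\<lambda>v w l r. \<Sum>k\<le>n. of_nat (n choose k) * (d * e) ^ (n - k) * G k v w l r) v w l r =
         (\<Sum>k\<le>n. of_nat (n choose k) * (d * e) ^ (n - k) * G (Suc k) v w l r) +
         (\<Sum>k\<le>n. of_nat (n choose k) * (d * e) ^ (Suc n - k) * G k v w l r)"
      using 1 2 by simp
  qed
  also have "\<dots> = (\<lambda>v w l r. \<Sum>k\<le>Suc n. of_nat (Suc n choose k) * (d * e) ^ (Suc n - k) * G k v w l r)"
  proof (intro ext)
    fix v w l r
    let ?f = "\<lambda>k. (d * e) ^ (Suc n - k) * G k v w l r"
    have "(\<Sum>k\<le>Suc n. of_nat (Suc n choose k) * ?f k) =
       ?f 0 + (\<Sum>k<Suc n. of_nat (Suc n choose Suc k) * ?f (Suc k))"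
      by (simp add: sum.atMost_shift)
    also have "\<dots> = ?f 0 + (\<Sum>k<Suc n. of_nat (n choose k) * ?f (Suc k)) + (\<Sum>k<Suc n. of_nat (n choose Suc k) * ?f (Suc k))"
      by (simp add: sum.distrib algebra_simps)
    also have "(\<Sum>k<Suc n. of_nat (n choose Suc k) * ?f (Suc k)) = (\<Sum>k\<le>n. of_nat (n choose k) * ?f k) - ?f 0"
    proof -
      have a: "(\<Sum>k<Suc n. of_nat (n choose Suc k) * ?f (Suc k)) = (\<Sum>k<n. of_nat (n choose Suc k) * ?f (Suc k))"
        by (simp add: binomial_eq_0)
      have b: "(\<Sum>k\<le>n. of_nat (n choose k) * ?f k) = of_nat (n choose 0) * ?f 0 + (\<Sum>k<n. of_nat (n choose Suc k) * ?f (Suc k))"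
        by (rule sum.atMost_shift)
      show ?thesis using a b by simp
    qed
    finally show "(\<Sum>k\<le>n. of_nat (n choose k) * (d * e) ^ (n - k) * G (Suc k) v w l r) +
         (\<Sum>k\<le>n. of_nat (n choose k) * (d * e) ^ (Suc n - k) * G k v w l r) =
         (\<Sum>k\<le>Suc n. of_nat (Suc n choose k) * (d * e) ^ (Suc n - k) * G k v w l r)"
      by (simp add: lessThan_Suc_atMost algebra_simps)
  qed
  finally show ?case unfolding G_def .
qed


lemma B1:
  fixes Z :: "nat \<Rightarrow> nat \<Rightarrow> 'a::comm_ring_1"
  shows "(\<Sum>r\<le>i. of_nat (i choose r) * (Z (Suc (i - r)) r + Z (i - r) (Suc r)))
       = (\<Sum>r\<le>Suc i. of_nat (Suc i choose r) * Z (Suc i - r) r)"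
proof -
  have R: "(\<Sum>r\<le>Suc i. of_nat (Suc i choose r) * Z (Suc i - r) r)
      = Z (Suc i) 0 + (\<Sum>r\<le>i. of_nat (i choose r) * Z (i - r) (Suc r))
        + (\<Sum>r\<le>i. of_nat (i choose Suc r) * Z (i - r) (Suc r))"
    by (subst sum.atMost_Suc_shift) (simp add: sum.distrib algebra_simps)
  have L1: "(\<Sum>r\<le>i. of_nat (i choose r) * Z (Suc (i - r)) r)
      = Z (Suc i) 0 + (\<Sum>r<i. of_nat (i choose Suc r) * Z (i - r) (Suc r))"
  proof -
    have "(\<Sum>r\<le>i. of_nat (i choose r) * Z (Suc (i - r)) r)
        = of_nat (i choose 0) * Z (Suc (i - 0)) 0 + (\<Sum>r<i. of_nat (i choose Suc r) * Z (Suc (i - Suc r)) (Suc r))"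
      by (rule sum.atMost_shift)
    also have "(\<Sum>r<i. of_nat (i choose Suc r) * Z (Suc (i - Suc r)) (Suc r))
        = (\<Sum>r<i. of_nat (i choose Suc r) * Z (i - r) (Suc r))"
      by (intro sum.cong refl) (simp add: Suc_diff_Suc)
    finally show ?thesis by simp
  qed
  have L2: "(\<Sum>r\<le>i. of_nat (i choose Suc r) * Z (i - r) (Suc r))
      = (\<Sum>r<i. of_nat (i choose Suc r) * Z (i - r) (Suc r))"
    by (simp add: lessThan_Suc_atMost[symmetric] binomial_eq_0 del: lessThan_Suc_atMost)
  show ?thesis using R L1 L2 by (simp add: sum.distrib algebra_simps)
qed

lemma B2:
  fixes Z :: "nat \<Rightarrow> nat \<Rightarrow> 'a::comm_ring_1"
  shows "(\<Sum>r\<le>i. of_nat (i choose r) * (of_nat (i - r) * Z (i - r - 1) r + of_nat r * Z (i - r) (r - 1)))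
       = 2 * of_nat i * (\<Sum>r\<le>i - 1. of_nat ((i - 1) choose r) * Z (i - 1 - r) r)"
proof (cases i)
  case 0 then show ?thesis by simp
next
  case (Suc n)
  have a: "(\<Sum>r\<le>Suc n. of_nat (Suc n choose r) * (of_nat (Suc n - r) * Z (Suc n - r - 1) r))
      = of_nat (Suc n) * (\<Sum>r\<le>n. of_nat (n choose r) * Z (n - r) r)"
  proof -
    have "(\<Sum>r\<le>Suc n. of_nat (Suc n choose r) * (of_nat (Suc n - r) * Z (Suc n - r - 1) r))
       = (\<Sum>r\<le>Suc n. of_nat (Suc n) * (of_nat (n choose r) * Z (n - r) r))"
    proof (intro sum.cong refl)
      fix r
      have "(Suc n - r) * (Suc n choose r) = Suc n * (n choose r)"
        using binomial_absorb_comp[of "Suc n" r] by simp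
      then have "(of_nat (Suc n choose r) * of_nat (Suc n - r) :: 'a) = of_nat (Suc n) * of_nat (n choose r)"
        by (metis of_nat_mult mult.commute)
      then show "of_nat (Suc n choose r) * (of_nat (Suc n - r) * Z (Suc n - r - 1) r) =
          of_nat (Suc n) * (of_nat (n choose r) * Z (n - r) r)"
        by (simp add: mult.assoc[symmetric])
    qed
    also have "\<dots> = of_nat (Suc n) * (\<Sum>r\<le>Suc n. of_nat (n choose r) * Z (n - r) r)"
      by (simp only: sum_distrib_left)
    also have "(\<Sum>r\<le>Suc n. of_nat (n choose r) * Z (n - r) r) = (\<Sum>r\<le>n. of_nat (n choose r) * Z (n - r) r)"
      by (simp add: binomial_eq_0)
    finally show ?thesis .
  qed
  have b: "(\<Sum>r\<le>Suc n. of_nat (Suc n choose r) * (of_nat r * Z (Suc n - r) (r - 1)))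
      = of_nat (Suc n) * (\<Sum>r\<le>n. of_nat (n choose r) * Z (n - r) r)"
  proof -
    have "(\<Sum>r\<le>Suc n. of_nat (Suc n choose r) * (of_nat r * Z (Suc n - r) (r - 1)))
       = (\<Sum>r\<le>n. of_nat (Suc n choose Suc r) * (of_nat (Suc r) * Z (n - r) r))"
      by (subst sum.atMost_Suc_shift) simp
    also have "\<dots> = (\<Sum>r\<le>n. of_nat (Suc n) * (of_nat (n choose r) * Z (n - r) r))"
    proof (intro sum.cong refl)
      fix r
      have "Suc r * (Suc n choose Suc r) = Suc n * (n choose r)"
        using binomial_absorption[of r "Suc n"] by simp
      then have "(of_nat (Suc n choose Suc r) * of_nat (Suc r) :: 'a) = of_nat (Suc n) * of_nat (n choose r)"
        by (metis of_nat_mult mult.commute)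
      then show "of_nat (Suc n choose Suc r) * (of_nat (Suc r) * Z (n - r) r) =
          of_nat (Suc n) * (of_nat (n choose r) * Z (n - r) r)"
        by (simp add: mult.assoc[symmetric])
    qed
    finally show ?thesis by (simp add: sum_distrib_left)
  qed
  have "(\<Sum>r\<le>i. of_nat (i choose r) * (of_nat (i - r) * Z (i - r - 1) r + of_nat r * Z (i - r) (r - 1)))
      = (\<Sum>r\<le>Suc n. of_nat (Suc n choose r) * (of_nat (Suc n - r) * Z (Suc n - r - 1) r))
       + (\<Sum>r\<le>Suc n. of_nat (Suc n choose r) * (of_nat r * Z (Suc n - r) (r - 1)))"
    unfolding Suc by (simp only: distrib_left sum.distrib)
  then show ?thesis using a b Suc by (simp add: algebra_simps)
qed


definition Le :: "'a::comm_ring_1 \<Rightarrow> (nat \<Rightarrow> nat \<Rightarrow> 'a) \<Rightarrow> nat \<Rightarrow> nat \<Rightarrow> 'a" where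
  "Le c h i j = c * h (Suc i) j + 2 * of_nat i * h (i - 1) (Suc j) + of_nat j * h (Suc i) j"

definition S2 :: "'a::comm_ring_1 \<Rightarrow> 'a \<Rightarrow> (nat \<Rightarrow> nat \<Rightarrow> 'a) \<Rightarrow> nat \<Rightarrow> nat \<Rightarrow> 'a" where
  "S2 a b h as ds = a * h (Suc as) ds + b * h as (Suc ds) + of_nat as * h as (Suc ds) + of_nat ds * h (Suc as) ds"

lemma Le_from:
  fixes Y Y' :: "nat \<Rightarrow> nat \<Rightarrow> 'a::comm_ring_1"
  assumes pt: "\<And>r. r \<le> i \<Longrightarrow> F r = (c + of_nat j) * (Y (Suc (i - r)) r + Y (i - r) (Suc r))
        + (of_nat (i - r) * Y' (i - r - 1) r + of_nat r * Y' (i - r) (r - 1))"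
  and IH1: "(\<Sum>r\<le>Suc i. of_nat (Suc i choose r) * Y (Suc i - r) r) = H (Suc i) j"
  and IH2: "(\<Sum>r\<le>i - 1. of_nat ((i - 1) choose r) * Y' (i - 1 - r) r) = H (i - 1) (Suc j)"
  shows "(\<Sum>r\<le>i. of_nat (i choose r) * F r) = Le c H i j"
proof -
  have "(\<Sum>r\<le>i. of_nat (i choose r) * F r) =
     (\<Sum>r\<le>i. (c + of_nat j) * (of_nat (i choose r) * (Y (Suc (i - r)) r + Y (i - r) (Suc r))))
     + (\<Sum>r\<le>i. of_nat (i choose r) * (of_nat (i - r) * Y' (i - r - 1) r + of_nat r * Y' (i - r) (r - 1)))"
    by (simp add: pt sum.distrib distrib_left mult.left_commute)
  also have "\<dots> = (c + of_nat j) * H (Suc i) j + 2 * of_nat i * H (i - 1) (Suc j)"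
    by (simp only: sum_distrib_left[symmetric] B1 B2 IH1 IH2)
  finally show ?thesis by (simp add: Le_def algebra_simps)
qed

lemma lemU:
  fixes u1 u2 u3 u4 c :: "'a::comm_ring_1"
  defines "mP \<equiv> \<lambda>v w l r. u1 ^ v * u2 ^ (w - 1) * u3 ^ r * u4 ^ l"
  shows "(\<Sum>r\<le>i. of_nat (i choose r) * (S4 c c ^^ k) mP j (Suc j) (i - r) r)
       = (Le c ^^ k) (\<lambda>i j. (u3 + u4) ^ i * (u1 * u2) ^ j) i j"
proof (induction k arbitrary: i j)
  case 0
  have "(\<Sum>r\<le>i. of_nat (i choose r) * mP j (Suc j) (i - r) r)
     = (\<Sum>r\<le>i. (u1 * u2) ^ j * (of_nat (i choose r) * u3 ^ r * u4 ^ (i - r)))"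
    by (intro sum.cong refl) (simp add: mP_def power_mult_distrib algebra_simps)
  also have "\<dots> = (u3 + u4) ^ i * (u1 * u2) ^ j"
    by (simp add: binomial_ring sum_distrib_left[symmetric] mult.commute)
  finally show ?case by simp
next
  case (Suc k)
  define Z where "Z = (S4 c c ^^ k) mP"
  show ?case
    unfolding funpow.simps o_apply Z_def[symmetric]
  proof (rule Le_from[where Y = "Z j (Suc j)" and Y' = "Z (Suc j) (Suc (Suc j))"])
    fix r assume "r \<le> i"
    show "S4 c c Z j (Suc j) (i - r) r = (c + of_nat j) * (Z j (Suc j) (Suc (i - r)) r + Z j (Suc j) (i - r) (Suc r))
        + (of_nat (i - r) * Z (Suc j) (Suc (Suc j)) (i - r - 1) r + of_nat r * Z (Suc j) (Suc (Suc j)) (i - r) (r - 1))"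
      by (simp add: S4_def algebra_simps)
  next
    show "(\<Sum>r\<le>Suc i. of_nat (Suc i choose r) * Z j (Suc j) (Suc i - r) r) = (Le c ^^ k) (\<lambda>i j. (u3 + u4) ^ i * (u1 * u2) ^ j) (Suc i) j"
      using Suc.IH[of "Suc i" j] unfolding Z_def .
  next
    show "(\<Sum>r\<le>i - 1. of_nat ((i - 1) choose r) * Z (Suc j) (Suc (Suc j)) (i - 1 - r) r) = (Le c ^^ k) (\<lambda>i j. (u3 + u4) ^ i * (u1 * u2) ^ j) (i - 1) (Suc j)"
      using Suc.IH[of "i - 1" "Suc j"] unfolding Z_def .
  qed
qed

lemma lemX:
  fixes x y c :: "'a::comm_ring_1"
  defines "mA \<equiv> \<lambda>a d. x ^ a * y ^ d"
  shows "(\<Sum>r\<le>i. of_nat (i choose r) * (S2 c c ^^ k) mA (r + j) (i - r + j))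
       = (Le c ^^ k) (\<lambda>i j. (x + y) ^ i * (x * y) ^ j) i j"
proof (induction k arbitrary: i j)
  case 0
  have "(\<Sum>r\<le>i. of_nat (i choose r) * mA (r + j) (i - r + j))
     = (\<Sum>r\<le>i. (x * y) ^ j * (of_nat (i choose r) * x ^ r * y ^ (i - r)))"
    unfolding mA_def by (intro sum.cong refl) (simp only: power_add power_mult_distrib, simp add: algebra_simps)
  also have "\<dots> = (x + y) ^ i * (x * y) ^ j"
    by (simp add: binomial_ring sum_distrib_left[symmetric] mult.commute)
  finally show ?case by simp
next
  case (Suc k)
  define Z where "Z = (S2 c c ^^ k) mA"
  show ?case
    unfolding funpow.simps o_apply Z_def[symmetric]
  proof (rule Le_from[where Y = "\<lambda>l r. Z (r + j) (l + j)" and Y' = "\<lambda>l r. Z (r + Suc j) (l + Suc j)"])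
    fix r assume ri: "r \<le> i"
    have e1: "of_nat r * Z (r + j) (Suc (i - r + j)) = (of_nat r * Z (r - 1 + Suc j) (i - r + Suc j) :: 'a)"
      by (cases r) auto
    have e2: "of_nat (i - r) * Z (Suc (r + j)) (i - r + j) = (of_nat (i - r) * Z (r + Suc j) (i - r - 1 + Suc j) :: 'a)"
      by (cases "i - r") auto
    show "S2 c c Z (r + j) (i - r + j) = (c + of_nat j) * (Z (r + j) (Suc (i - r) + j) + Z (Suc r + j) (i - r + j))
        + (of_nat (i - r) * Z (r + Suc j) (i - r - 1 + Suc j) + of_nat r * Z (r - 1 + Suc j) (i - r + Suc j))"
      using e1 e2 by (simp add: S2_def algebra_simps)
  next
    show "(\<Sum>r\<le>Suc i. of_nat (Suc i choose r) * Z (r + j) (Suc i - r + j)) = (Le c ^^ k) (\<lambda>i j. (x + y) ^ i * (x * y) ^ j) (Suc i) j"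
      using Suc.IH[of "Suc i" j] unfolding Z_def .
  next
    show "(\<Sum>r\<le>i - 1. of_nat ((i - 1) choose r) * Z (r + Suc j) (i - 1 - r + Suc j)) = (Le c ^^ k) (\<lambda>i j. (x + y) ^ i * (x * y) ^ j) (i - 1) (Suc j)"
      using Suc.IH[of "i - 1" "Suc j"] unfolding Z_def .
  qed
qed


definition sh :: "nat \<Rightarrow> nat" where "sh x = (if x = 0 then 0 else Suc x)"

lemma sh_less[simp]: "sh a < sh b \<longleftrightarrow> a < b" by (auto simp: sh_def)
lemma sh_pos[simp]: "0 < sh a \<longleftrightarrow> 0 < a" by (auto simp: sh_def)
lemma sh_1_less[simp]: "1 < sh a \<longleftrightarrow> 0 < a" by (auto simp: sh_def)
lemma sh_less_1[simp]: "sh a < 1 \<longleftrightarrow> a = 0" by (auto simp: sh_def)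
lemma sh_0[simp]: "sh 0 = 0" by (auto simp: sh_def)
lemma sh_ne1[simp]: "sh a \<noteq> 1" by (auto simp: sh_def)

definition ins :: "nat list \<Rightarrow> nat \<Rightarrow> nat list" where
  "ins t p = take p (map Suc t) @ 1 # drop p (map Suc t)"

definition pos :: "nat list \<Rightarrow> bool" where "pos s \<longleftrightarrow> (\<forall>x\<in>set s. 0 < x)"

lemma length_ins[simp]: "length (ins t p) = Suc (length t)"
  by (simp add: ins_def)

lemma ent_0[simp]: "ent s 0 = 0" by (simp add: ent_def)

lemma ent_pos: "pos s \<Longrightarrow> (0 < ent s i) = (1 \<le> i \<and> i \<le> length s)"
  by (auto simp: ent_def pos_def)

lemma ent_ins:
  assumes "pos t" "p \<le> length t"
  shows "ent (ins t p) i = (if i \<le> p then sh (ent t i) else if i = Suc p then 1 else sh (ent t (i - 1)))"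
proof -
  have P: "\<And>k. k < length t \<Longrightarrow> 0 < t ! k" using assms(1) by (auto simp: pos_def)
  show ?thesis
  proof (cases "i \<le> p")
    case True
    then show ?thesis using assms P[of "i - 1"]
      by (auto simp: ent_def ins_def nth_append sh_def min_def)
  next
    case False
    show ?thesis
    proof (cases "i = Suc p")
      case True then show ?thesis using assms by (auto simp: ent_def ins_def nth_append min_def)
    next
      case False
      with \<open>\<not> i \<le> p\<close> have "i \<ge> Suc (Suc p)" by auto
      then show ?thesis using assms P[of "i - 2"]
        by (auto simp: ent_def ins_def nth_append sh_def min_def nth_Cons' numeral_2_eq_2)
    qed
  qed
qed

definition hb :: "(nat \<Rightarrow> nat \<Rightarrow> nat \<Rightarrow> bool) \<Rightarrow> nat list \<Rightarrow> nat \<Rightarrow> nat" where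
  "hb Q s i = (if 0 < ent s i \<and> Q (ent s (i - 1)) (ent s i) (ent s (Suc i)) then 1 else 0)"

definition lc :: "(nat \<Rightarrow> nat \<Rightarrow> nat \<Rightarrow> bool) \<Rightarrow> nat list \<Rightarrow> nat" where
  "lc Q s = (\<Sum>i<length s + 2. hb Q s i)"

lemma sum_add_split: "(\<Sum>i<p + (k::nat). f i) = (\<Sum>i<p. f i) + (\<Sum>i<k. f (p + i))"
  by (induction k) (auto simp: add.assoc)

lemma lc_ins:
  assumes "pos t" "p \<le> length t" and Q: "\<And>a b c. Q (sh a) (sh b) (sh c) = Q a b c"
  shows "lc Q (ins t p) + hb Q t p + hb Q t (Suc p) = lc Q t
     + (if 0 < ent t p \<and> Q (sh (ent t (p - 1))) (sh (ent t p)) 1 then 1 else 0)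
     + (if Q (sh (ent t p)) 1 (sh (ent t (Suc p))) then 1 else 0)
     + (if 0 < ent t (Suc p) \<and> Q 1 (sh (ent t (Suc p))) (sh (ent t (Suc (Suc p)))) then 1 else 0)"
proof -
  define m where "m = length t"
  define k where "k = m - p"
  have E: "\<And>i. ent (ins t p) i = (if i \<le> p then sh (ent t i) else if i = Suc p then 1 else sh (ent t (i - 1)))"
    using ent_ins[OF assms(1,2)] .
  have s1: "lc Q (ins t p) = (\<Sum>i<p. hb Q t i) + (hb Q (ins t p) p + hb Q (ins t p) (Suc p) + hb Q (ins t p) (Suc (Suc p)))
      + (\<Sum>i<k. hb Q t (p + 2 + i))"
  proof -
    have "length (ins t p) + 2 = p + (3 + k)" using assms(2) by (simp add: k_def m_def)
    then have "lc Q (ins t p) = (\<Sum>i<p. hb Q (ins t p) i) + (\<Sum>i<3 + k. hb Q (ins t p) (p + i))"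
      unfolding lc_def by (simp only: sum_add_split)
    also have "(\<Sum>i<p. hb Q (ins t p) i) = (\<Sum>i<p. hb Q t i)"
      by (intro sum.cong refl) (auto simp add: hb_def E Q)
    also have "(\<Sum>i<3 + k. hb Q (ins t p) (p + i)) = hb Q (ins t p) p + hb Q (ins t p) (Suc p) + hb Q (ins t p) (Suc (Suc p))
        + (\<Sum>i<k. hb Q (ins t p) (p + 3 + i))"
      by (simp only: numeral_3_eq_3 plus_nat.simps sum.lessThan_Suc_shift) (simp add: add.assoc)
    also have "(\<Sum>i<k. hb Q (ins t p) (p + 3 + i)) = (\<Sum>i<k. hb Q t (p + 2 + i))"
      by (intro sum.cong refl) (simp add: hb_def E Q numeral_3_eq_3 numeral_2_eq_2)
    finally show ?thesis by simp
  qed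
  have s2: "lc Q t = (\<Sum>i<p. hb Q t i) + (hb Q t p + hb Q t (Suc p)) + (\<Sum>i<k. hb Q t (p + 2 + i))"
  proof -
    have "length t + 2 = p + (2 + k)" using assms(2) by (simp add: k_def m_def)
    then have "lc Q t = (\<Sum>i<p. hb Q t i) + (\<Sum>i<2 + k. hb Q t (p + i))"
      unfolding lc_def by (simp only: sum_add_split)
    also have "(\<Sum>i<2 + k. hb Q t (p + i)) = hb Q t p + hb Q t (Suc p) + (\<Sum>i<k. hb Q t (p + 2 + i))"
      by (simp only: numeral_2_eq_2 plus_nat.simps sum.lessThan_Suc_shift) (simp add: add.assoc)
    finally show ?thesis by simp
  qed
  have h1: "hb Q (ins t p) p = (if 0 < ent t p \<and> Q (sh (ent t (p - 1))) (sh (ent t p)) 1 then 1 else 0)"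
    by (simp add: hb_def E)
  have h2: "hb Q (ins t p) (Suc p) = (if Q (sh (ent t p)) 1 (sh (ent t (Suc p))) then 1 else 0)"
    by (simp add: hb_def E)
  have h3: "hb Q (ins t p) (Suc (Suc p)) = (if 0 < ent t (Suc p) \<and> Q 1 (sh (ent t (Suc p))) (sh (ent t (Suc (Suc p)))) then 1 else 0)"
    by (simp add: hb_def E)
  show ?thesis using s1 s2 h1 h2 h3 by simp
qed


lemma ent_gt: "ent s a < ent s b \<Longrightarrow> 0 < b \<and> b \<le> length s"
  by (auto simp: ent_def split: if_splits)

lemma card_lc:
  assumes "{i \<in> A. P i} = {i \<in> {..<length s + 2}. 0 < ent s i \<and> Q (ent s (i - 1)) (ent s i) (ent s (Suc i))}"
  shows "card {i \<in> A. P i} = lc Q s"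
proof -
  have "card {i \<in> A. P i} = (\<Sum>i\<in>{i \<in> {..<length s + 2}. 0 < ent s i \<and> Q (ent s (i - 1)) (ent s i) (ent s (Suc i))}. 1)"
    unfolding assms by (rule card_eq_sum)
  also have "\<dots> = lc Q s" unfolding lc_def hb_def by (subst sum.inter_filter) auto
  finally show ?thesis .
qed

lemma asc_lc: "pos s \<Longrightarrow> asc s = lc (\<lambda>a b c. b < c) s"
  unfolding asc_def by (rule card_lc) (auto simp: ent_pos dest: ent_gt)
lemma des_lc: "pos s \<Longrightarrow> des s = lc (\<lambda>a b c. c < b \<and> 0 < c) s"
  unfolding des_def by (rule card_lc) (auto simp: ent_pos dest: ent_gt)
lemma W_lc: "pos s \<Longrightarrow> Wst s = lc (\<lambda>a b c. a < b \<and> c < b) s"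
  unfolding Wst_def by (rule card_lc) (auto simp: ent_pos dest: ent_gt)
lemma V_lc: "pos s \<Longrightarrow> Vst s = lc (\<lambda>a b c. b < a \<and> b < c) s"
  unfolding Vst_def by (rule card_lc) (auto simp: ent_pos dest: ent_gt)
lemma rdd_lc: "pos s \<Longrightarrow> rdd s = lc (\<lambda>a b c. b < a \<and> c < b) s"
  unfolding rdd_def by (rule card_lc) (auto simp: ent_pos dest: ent_gt)
lemma lda_lc: "pos s \<Longrightarrow> lda s = lc (\<lambda>a b c. a < b \<and> b < c) s"
  unfolding lda_def by (rule card_lc) (auto simp: ent_pos dest: ent_gt)


lemma perms_pos: "t \<in> perms m \<Longrightarrow> pos t"
  by (auto simp: perms_def pos_def)

lemma perms_len: "t \<in> perms m \<Longrightarrow> length t = m"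
proof -
  assume "t \<in> perms m"
  then have "distinct t" "set t = {1..m}" by (auto simp: perms_def)
  then show "length t = m" using distinct_card[of t] by simp
qed

lemma perms_ent_inj:
  assumes "t \<in> perms m" "1 \<le> i" "i \<le> m" "1 \<le> j" "j \<le> m" "ent t i = ent t j"
  shows "i = j"
proof -
  have d: "distinct t" and l: "length t = m" using assms(1) perms_len[OF assms(1)] by (auto simp: perms_def)
  have "t ! (i - 1) = t ! (j - 1)" using assms l by (simp add: ent_def)
  then have "i - 1 = j - 1" using d l assms by (simp add: nth_eq_iff_index_eq)
  then show ?thesis using assms by simp
qed

lemma finite_perms: "finite (perms m)"
proof -
  have "perms m \<subseteq> {xs. set xs \<subseteq> {1..m} \<and> length xs = m}"
  proof
    fix xs assume "xs \<in> perms m"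
    then show "xs \<in> {xs. set xs \<subseteq> {1..m} \<and> length xs = m}"
      using perms_len[of xs m] by (auto simp: perms_def)
  qed
  moreover have "finite {xs. set xs \<subseteq> {1..m} \<and> length xs = m}"
    by (rule finite_lists_length_eq) simp
  ultimately show ?thesis by (rule finite_subset)
qed

lemma ins_perms:
  assumes "t \<in> perms m" "p \<le> m"
  shows "ins t p \<in> perms (Suc m)"
proof -
  have d: "distinct t" and st: "set t = {1..m}" using assms by (auto simp: perms_def)
  define xs where "xs = take p (map Suc t)"
  define ys where "ys = drop p (map Suc t)"
  have d2: "distinct (map Suc t)" using d by (simp add: distinct_map)
  have sm: "set (map Suc t) = {2..Suc m}"
  proof -
    have "Suc ` {1..m} = {Suc 1..Suc m}" by (rule image_Suc_atLeastAtMost)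
    then show ?thesis using st by simp
  qed
  have xy: "xs @ ys = map Suc t" by (simp add: xs_def ys_def)
  have dxy: "distinct (xs @ ys)" using xy d2 by simp
  have n1: "1 \<notin> set (xs @ ys)" using xy sm by simp
  have "distinct (xs @ 1 # ys)" using dxy n1 by (simp add: distinct_append)
  moreover have "set (xs @ 1 # ys) = {1..Suc m}"
  proof -
    have "set (xs @ 1 # ys) = insert 1 (set (xs @ ys))" by simp
    also have "\<dots> = insert 1 {2..Suc m}" using xy sm by simp
    also have "\<dots> = {1..Suc m}" by auto
    finally show ?thesis .
  qed
  ultimately show ?thesis unfolding ins_def xs_def[symmetric] ys_def[symmetric] perms_def by simp
qed

lemma ins_inj:
  assumes "t \<in> perms m" "t' \<in> perms m" "p \<le> m" "p' \<le> m" "ins t p = ins t' p'"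
  shows "t = t' \<and> p = p'"
proof -
  have n1: "1 \<notin> set (take p (map Suc t))" "1 \<notin> set (drop p (map Suc t))"
    "1 \<notin> set (take p' (map Suc t'))" "1 \<notin> set (drop p' (map Suc t'))"
    using assms(1,2) by (auto simp: perms_def dest!: in_set_takeD in_set_dropD)
  have "take p (map Suc t) = take p' (map Suc t') \<and> drop p (map Suc t) = drop p' (map Suc t')"
    using assms(5) n1 unfolding ins_def by (simp add: append_Cons_eq_iff)
  moreover have "length t = m" "length t' = m" using perms_len[OF assms(1)] perms_len[OF assms(2)] by auto
  ultimately have tk: "take p (map Suc t) = take p' (map Suc t')" and dr: "drop p (map Suc t) = drop p' (map Suc t')"
    by auto
  have "length (take p (map Suc t)) = p" "length (take p' (map Suc t')) = p'"
    using \<open>length t = m\<close> \<open>length t' = m\<close> assms(3,4) by auto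
  then have pp: "p = p'" using tk by simp
  have "map Suc t = take p (map Suc t) @ drop p (map Suc t)" by simp
  also have "\<dots> = take p' (map Suc t') @ drop p' (map Suc t')" using tk dr by simp
  also have "\<dots> = map Suc t'" by simp
  finally have "map Suc t = map Suc t'" .
  then have "t = t'" by (simp add: inj_map_eq_map)
  then show ?thesis using pp by simp
qed

lemma ins_surj:
  assumes "s \<in> perms (Suc m)"
  shows "\<exists>t p. t \<in> perms m \<and> p \<le> m \<and> s = ins t p"
proof -
  have d: "distinct s" and st: "set s = {1..Suc m}" using assms by (auto simp: perms_def)
  have ls: "length s = Suc m" using perms_len[OF assms] .
  have "1 \<in> set s" using st by auto
  from split_list[OF this] obtain xs ys where s: "s = xs @ 1 # ys" by blast
  have n: "1 \<notin> set xs" "1 \<notin> set ys" using d unfolding s by auto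
  have sxy: "set (xs @ ys) = {2..Suc m}"
  proof -
    have "insert 1 (set (xs @ ys)) = set s" by (simp add: s)
    then have "insert 1 (set (xs @ ys)) = {1..Suc m}" using st by simp
    moreover have "set (xs @ ys) = insert 1 (set (xs @ ys)) - {1}" using n by simp
    ultimately have "set (xs @ ys) = {1..Suc m} - {1}" by simp
    moreover have "{1..Suc m} - {1::nat} = {2..Suc m}" by auto
    ultimately show ?thesis by (simp only:)
  qed
  define t where "t = map (\<lambda>x. x - 1) (xs @ ys)"
  have ge2: "\<forall>x\<in>set (xs @ ys). 2 \<le> x" using sxy by auto
  have mt: "map Suc t = xs @ ys" unfolding t_def map_map o_def
  proof (rule map_idI)
    fix x assume "x \<in> set (xs @ ys)"
    then have "2 \<le> x" using ge2 by blast
    then show "Suc (x - 1) = x" by simp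
  qed
  have dxy: "distinct (xs @ ys)" using d unfolding s by auto
  have "distinct (map Suc t)" using dxy mt by simp
  then have dt: "distinct t" by (simp add: distinct_map)
  have stt: "set t = {1..m}"
  proof -
    have "Suc ` set t = set (map Suc t)" by simp
    then have "Suc ` set t = {2..Suc m}" using mt sxy by simp
    moreover have "Suc ` {1..m} = {2..Suc m}" using image_Suc_atLeastAtMost[of 1 m] by simp
    ultimately have "Suc ` set t = Suc ` {1..m}" by simp
    then show ?thesis using inj_image_eq_iff[OF inj_Suc] by blast
  qed
  have tp: "t \<in> perms m" using dt stt by (simp add: perms_def)
  have lt: "length t = m" using perms_len[OF tp] .
  have "length xs \<le> m" using ls s by simp
  moreover have "s = ins t (length xs)" unfolding ins_def mt s by simp
  ultimately show ?thesis using tp by blast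
qed

lemma sum_perms_Suc:
  "(\<Sum>s\<in>perms (Suc m). F s) = (\<Sum>t\<in>perms m. \<Sum>p\<le>m. F (ins t p))"
proof -
  have img: "perms (Suc m) = (\<lambda>(t, p). ins t p) ` (perms m \<times> {..m})"
  proof
    show "perms (Suc m) \<subseteq> (\<lambda>(t, p). ins t p) ` (perms m \<times> {..m})"
    proof
      fix s assume "s \<in> perms (Suc m)"
      then obtain t p where "t \<in> perms m" "p \<le> m" "s = ins t p" using ins_surj by blast
      then show "s \<in> (\<lambda>(t, p). ins t p) ` (perms m \<times> {..m})" by force
    qed
  next
    show "(\<lambda>(t, p). ins t p) ` (perms m \<times> {..m}) \<subseteq> perms (Suc m)"
      using ins_perms by auto
  qed
  have inj: "inj_on (\<lambda>(t, p). ins t p) (perms m \<times> {..m})"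
    by (auto simp: inj_on_def dest: ins_inj)
  have "(\<Sum>s\<in>perms (Suc m). F s) = (\<Sum>(t, p)\<in>perms m \<times> {..m}. F (ins t p))"
    unfolding img by (subst sum.reindex[OF inj]) (simp add: case_prod_beta)
  also have "\<dots> = (\<Sum>t\<in>perms m. \<Sum>p\<le>m. F (ins t p))"
    by (simp add: sum.cartesian_product)
  finally show ?thesis .
qed


fun lrm :: "nat \<Rightarrow> nat list \<Rightarrow> nat" where
  "lrm M [] = 0"
| "lrm M (x # xs) = (if M < x then Suc (lrm x xs) else lrm M xs)"

fun rlm :: "nat list \<Rightarrow> nat" where
  "rlm [] = 0"
| "rlm (x # xs) = (if \<forall>y\<in>set xs. y < x then Suc (rlm xs) else rlm xs)"

lemma ent_Cons: "ent (x # s) i = (if i = 0 then 0 else if i = 1 then x else ent s (i - 1))"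
  by (auto simp: ent_def nth_Cons')

lemma ent_Cons_Suc[simp]: "ent (x # s) (Suc i) = (if i = 0 then x else ent s i)"
  by (simp add: ent_Cons)

lemma card_Suc_split:
  "card {i \<in> {1..Suc n}. P i} = (if P 1 then 1 else 0) + card {i \<in> {1..n}. P (Suc i)}"
proof -
  have eq: "{i \<in> {1..Suc n}. P i} = (if P 1 then {1} else {}) \<union> Suc ` {i \<in> {1..n}. P (Suc i)}"
  proof (intro set_eqI iffI)
    fix i assume i: "i \<in> {i \<in> {1..Suc n}. P i}"
    show "i \<in> (if P 1 then {1} else {}) \<union> Suc ` {i \<in> {1..n}. P (Suc i)}"
    proof (cases "i = 1")
      case True then show ?thesis using i by simp
    next
      case False
      then have "i = Suc (i - 1)" "i - 1 \<in> {i \<in> {1..n}. P (Suc i)}" using i by auto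
      then have "i \<in> Suc ` {i \<in> {1..n}. P (Suc i)}" by (metis imageI)
      then show ?thesis by simp
    qed
  next
    fix i assume "i \<in> (if P 1 then {1} else {}) \<union> Suc ` {i \<in> {1..n}. P (Suc i)}"
    then show "i \<in> {i \<in> {1..Suc n}. P i}" by (auto split: if_splits)
  qed
  have "card ((if P 1 then {1} else {}) \<union> Suc ` {i \<in> {1..n}. P (Suc i)})
      = card (if P 1 then {1::nat} else {}) + card (Suc ` {i \<in> {1..n}. P (Suc i)})"
    by (rule card_Un_disjoint) auto
  also have "card (Suc ` {i \<in> {1..n}. P (Suc i)}) = card {i \<in> {1..n}. P (Suc i)}"
    by (rule card_image) simp
  finally show ?thesis unfolding eq by simp
qed

lemma all_shift1: "1 \<le> n \<Longrightarrow> (\<forall>j\<in>{1..<Suc n}. P j) \<longleftrightarrow> P 1 \<and> (\<forall>j\<in>{1..<n}. P (Suc j))"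
proof
  assume "\<forall>j\<in>{1..<Suc n}. P j" "1 \<le> n"
  then show "P 1 \<and> (\<forall>j\<in>{1..<n}. P (Suc j))" by auto
next
  assume a: "P 1 \<and> (\<forall>j\<in>{1..<n}. P (Suc j))"
  show "\<forall>j\<in>{1..<Suc n}. P j"
  proof
    fix j assume j: "j \<in> {1..<Suc n}"
    show "P j"
    proof (cases "j = 1")
      case True then show ?thesis using a by simp
    next
      case False
      then have "j = Suc (j - 1)" "j - 1 \<in> {1..<n}" using j by auto
      then show ?thesis using a by metis
    qed
  qed
qed

lemma all_shift2: "(\<forall>j\<in>{Suc i<..Suc n}. P j) \<longleftrightarrow> (\<forall>j\<in>{i<..n}. P (Suc j))"
proof
  assume "\<forall>j\<in>{Suc i<..Suc n}. P j" then show "\<forall>j\<in>{i<..n}. P (Suc j)" by auto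
next
  assume a: "\<forall>j\<in>{i<..n}. P (Suc j)"
  show "\<forall>j\<in>{Suc i<..Suc n}. P j"
  proof
    fix j assume j: "j \<in> {Suc i<..Suc n}"
    then have "j = Suc (j - 1)" "j - 1 \<in> {i<..n}" by auto
    then show "P j" using a by metis
  qed
qed

lemma lrm_card:
  "card {i \<in> {1..length s}. M < ent s i \<and> (\<forall>j\<in>{1..<i}. ent s j < ent s i)} = lrm M s"
proof (induction s arbitrary: M)
  case Nil then show ?case by simp
next
  case (Cons x s)
  have "card {i \<in> {1..length (x # s)}. M < ent (x # s) i \<and> (\<forall>j\<in>{1..<i}. ent (x # s) j < ent (x # s) i)}
     = (if M < x then 1 else 0) + card {i \<in> {1..length s}. M < ent s i \<and> (\<forall>j\<in>{1..<Suc i}. ent (x # s) j < ent s i)}"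
    by (simp only: length_Cons card_Suc_split) (simp add: Suc_le_eq cong: conj_cong)
  also have "{i \<in> {1..length s}. M < ent s i \<and> (\<forall>j\<in>{1..<Suc i}. ent (x # s) j < ent s i)}
      = {i \<in> {1..length s}. max M x < ent s i \<and> (\<forall>j\<in>{1..<i}. ent s j < ent s i)}"
  proof (rule Collect_cong)
    fix i
    show "(i \<in> {1..length s} \<and> M < ent s i \<and> (\<forall>j\<in>{1..<Suc i}. ent (x # s) j < ent s i)) =
          (i \<in> {1..length s} \<and> max M x < ent s i \<and> (\<forall>j\<in>{1..<i}. ent s j < ent s i))"
    proof (cases "1 \<le> i")
      case True
      then show ?thesis using all_shift1[OF True, of "\<lambda>j. ent (x # s) j < ent s i"] by simp
    next
      case False then show ?thesis by simp
    qed
  qed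
  also have "card \<dots> = lrm (max M x) s" by (rule Cons.IH)
  finally show ?case by (simp add: max_def)
qed

lemma LR_lrm: "pos s \<Longrightarrow> LRmax s = lrm 0 s"
  unfolding LRmax_def lrm_card[symmetric, of 0 s]
  by (intro arg_cong[where f = card] Collect_cong) (auto simp: ent_pos)

lemma rlm_card:
  "card {i \<in> {1..length s}. \<forall>j\<in>{i<..length s}. ent s j < ent s i} = rlm s"
proof (induction s)
  case Nil then show ?case by simp
next
  case (Cons x s)
  have "card {i \<in> {1..length (x # s)}. \<forall>j\<in>{i<..length (x # s)}. ent (x # s) j < ent (x # s) i}
     = (if (\<forall>j\<in>{1<..Suc (length s)}. ent (x # s) j < x) then 1 else 0)
       + card {i \<in> {1..length s}. \<forall>j\<in>{Suc i<..Suc (length s)}. ent (x # s) j < ent s i}"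
    by (simp only: length_Cons card_Suc_split) (simp add: Suc_le_eq cong: conj_cong)
  also have "{i \<in> {1..length s}. \<forall>j\<in>{Suc i<..Suc (length s)}. ent (x # s) j < ent s i}
      = {i \<in> {1..length s}. \<forall>j\<in>{i<..length s}. ent s j < ent s i}"
    by (intro Collect_cong conj_cong refl) (auto simp: all_shift2)
  also have "(\<forall>j\<in>{1<..Suc (length s)}. ent (x # s) j < x) = (\<forall>y\<in>set s. y < x)"
  proof -
    have "(\<forall>j\<in>{1<..Suc (length s)}. ent (x # s) j < x) = (\<forall>j\<in>{0<..length s}. ent s j < x)"
      using all_shift2[of 0 "length s" "\<lambda>j. ent (x # s) j < x"] by simp
    also have "\<dots> = (\<forall>k<length s. s ! k < x)"
    proof
      assume a: "\<forall>j\<in>{0<..length s}. ent s j < x"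
      show "\<forall>k<length s. s ! k < x"
      proof (intro allI impI)
        fix k assume "k < length s"
        then show "s ! k < x" using a[rule_format, of "Suc k"] by (simp add: ent_def)
      qed
    next
      assume a: "\<forall>k<length s. s ! k < x"
      then show "\<forall>j\<in>{0<..length s}. ent s j < x" by (auto simp: ent_def)
    qed
    also have "\<dots> = (\<forall>y\<in>set s. y < x)" by (simp add: all_set_conv_all_nth)
    finally show ?thesis .
  qed
  finally show ?case using Cons.IH by simp
qed

lemma RL_rlm: "RLmax s = rlm s"
  unfolding RLmax_def by (rule rlm_card)

lemma lrm_cong: "(\<forall>y\<in>set ys. M < y \<and> M' < y) \<Longrightarrow> lrm M ys = lrm M' ys"
  by (cases ys) auto

lemma lrm_ins:
  assumes "\<forall>x\<in>set xs. 2 \<le> x" "\<forall>x\<in>set ys. 2 \<le> x"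
  shows "lrm M (xs @ 1 # ys) = lrm M (xs @ ys) + (if xs = [] \<and> M = 0 then 1 else 0)"
  using assms(1)
proof (induction xs arbitrary: M)
  case Nil
  have "lrm 1 ys = lrm 0 ys" using assms(2) by (intro lrm_cong) auto
  then show ?case by simp
next
  case (Cons x xs)
  then show ?case by auto
qed

lemma lrm_Suc_map: "lrm (Suc M) (map Suc t) = lrm M t"
  by (induction t arbitrary: M) auto

lemma lrm_0_map: "pos t \<Longrightarrow> lrm 0 (map Suc t) = lrm 0 t"
  by (cases t) (auto simp: pos_def lrm_Suc_map)

lemma rlm_ins:
  assumes "\<forall>x\<in>set xs. 2 \<le> x" "\<forall>x\<in>set ys. 2 \<le> x"
  shows "rlm (xs @ 1 # ys) = rlm (xs @ ys) + (if ys = [] then 1 else 0)"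
  using assms(1)
proof (induction xs)
  case Nil
  have "(\<forall>y\<in>set ys. y < 1) = (ys = [])" using assms(2) by (cases ys) auto
  then show ?case by simp
next
  case (Cons x xs)
  then have "(\<forall>y\<in>set (xs @ 1 # ys). y < x) = (\<forall>y\<in>set (xs @ ys). y < x)" by auto
  then show ?case using Cons by simp
qed

lemma rlm_map_Suc: "rlm (map Suc t) = rlm t"
  by (induction t) auto

lemma lrm_ge1: "pos s \<Longrightarrow> s \<noteq> [] \<Longrightarrow> 1 \<le> lrm 0 s"
  by (cases s) (auto simp: pos_def)

lemma rlm_ge1: "s \<noteq> [] \<Longrightarrow> 1 \<le> rlm s"
proof (induction s)
  case Nil then show ?case by simp
next
  case (Cons x s) then show ?case by (cases s) auto
qed

lemma LR_ins:
  assumes "t \<in> perms m" "1 \<le> m" "p \<le> m"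
  shows "LRmax (ins t p) = LRmax t + (if p = 0 then 1 else 0)"
proof -
  have pt: "pos t" using assms perms_pos by auto
  have lt: "length t = m" using perms_len[OF assms(1)] .
  have pi: "pos (ins t p)" using ins_perms[OF assms(1,3)] perms_pos by auto
  have g: "\<forall>x\<in>set (map Suc t). 2 \<le> x" using pt by (auto simp: pos_def)
  have "LRmax (ins t p) = lrm 0 (take p (map Suc t) @ 1 # drop p (map Suc t))"
    using LR_lrm[OF pi] by (simp add: ins_def)
  also have "\<dots> = lrm 0 (map Suc t) + (if take p (map Suc t) = [] then 1 else 0)"
    using g set_take_subset[of p "map Suc t"] set_drop_subset[of p "map Suc t"]
    by (subst lrm_ins) (blast | simp)+
  also have "(take p (map Suc t) = []) = (p = 0)" using lt assms(2) by auto
  finally show ?thesis using lrm_0_map[OF pt] LR_lrm[OF pt] by simp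
qed

lemma RL_ins:
  assumes "t \<in> perms m" "p \<le> m"
  shows "RLmax (ins t p) = RLmax t + (if p = m then 1 else 0)"
proof -
  have pt: "pos t" using assms perms_pos by auto
  have lt: "length t = m" using perms_len[OF assms(1)] .
  have g: "\<forall>x\<in>set (map Suc t). 2 \<le> x" using pt by (auto simp: pos_def)
  have "RLmax (ins t p) = rlm (take p (map Suc t) @ 1 # drop p (map Suc t))"
    by (simp add: ins_def RL_rlm)
  also have "\<dots> = rlm (map Suc t) + (if drop p (map Suc t) = [] then 1 else 0)"
    using g set_take_subset[of p "map Suc t"] set_drop_subset[of p "map Suc t"]
    by (subst rlm_ins) (blast | simp)+
  also have "(drop p (map Suc t) = []) = (p = m)" using lt assms(2) by auto
  finally show ?thesis using rlm_map_Suc RL_rlm by simp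
qed

lemma LR_ge1: "t \<in> perms m \<Longrightarrow> 1 \<le> m \<Longrightarrow> 1 \<le> LRmax t"
  using LR_lrm lrm_ge1 perms_pos perms_len by (metis list.size(3) not_one_le_zero)

lemma RL_ge1: "t \<in> perms m \<Longrightarrow> 1 \<le> m \<Longrightarrow> 1 \<le> RLmax t"
  using RL_rlm rlm_ge1 perms_len by (metis list.size(3) not_one_le_zero)


lemma sh_Suc0_less[simp]: "Suc 0 < sh a \<longleftrightarrow> 0 < a" by (auto simp: sh_def)
lemma sh_eq0[simp]: "sh a = 0 \<longleftrightarrow> a = 0" by (auto simp: sh_def)

lemma hb_t: "hb Q t p = (if 0 < ent t p \<and> Q (ent t (p - 1)) (ent t p) (ent t (Suc p)) then 1 else 0)"
  by (simp add: hb_def)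

lemma stat_ins:
  assumes "t \<in> perms m" "p \<le> m"
  defines "a \<equiv> ent t (p - 1)" and "b \<equiv> ent t p" and "c \<equiv> ent t (Suc p)" and "d \<equiv> ent t (Suc (Suc p))"
  shows
   "Vst (ins t p) + (if 0 < b \<and> b < a \<and> b < c then 1 else 0) + (if 0 < c \<and> c < b \<and> c < d then 1 else 0)
     = Vst t + (if 0 < b \<and> sh b < sh a \<and> sh b < 1 then 1 else 0) + (if 1 < sh b \<and> 1 < sh c then 1 else 0)
       + (if 0 < c \<and> sh c < 1 \<and> sh c < sh d then 1 else 0)" (is ?V)
   "Wst (ins t p) + (if 0 < b \<and> a < b \<and> c < b then 1 else 0) + (if 0 < c \<and> b < c \<and> d < c then 1 else 0)
     = Wst t + (if 0 < b \<and> sh a < sh b \<and> 1 < sh b then 1 else 0) + (if sh b < 1 \<and> sh c < 1 then 1 else 0)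
       + (if 0 < c \<and> 1 < sh c \<and> sh d < sh c then 1 else 0)" (is ?W)
   "lda (ins t p) + (if 0 < b \<and> a < b \<and> b < c then 1 else 0) + (if 0 < c \<and> b < c \<and> c < d then 1 else 0)
     = lda t + (if 0 < b \<and> sh a < sh b \<and> sh b < 1 then 1 else 0) + (if sh b < 1 \<and> 1 < sh c then 1 else 0)
       + (if 0 < c \<and> 1 < sh c \<and> sh c < sh d then 1 else 0)" (is ?L)
   "rdd (ins t p) + (if 0 < b \<and> b < a \<and> c < b then 1 else 0) + (if 0 < c \<and> c < b \<and> d < c then 1 else 0)
     = rdd t + (if 0 < b \<and> sh b < sh a \<and> 1 < sh b then 1 else 0) + (if 1 < sh b \<and> sh c < 1 then 1 else 0)
       + (if 0 < c \<and> sh c < 1 \<and> sh d < sh c then 1 else 0)" (is ?R)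
   "asc (ins t p) + (if 0 < b \<and> b < c then 1 else 0) + (if 0 < c \<and> c < d then 1 else 0)
     = asc t + (if 0 < b \<and> sh b < 1 then 1 else 0) + (if 1 < sh c then 1 else 0)
       + (if 0 < c \<and> sh c < sh d then 1 else 0)" (is ?A)
   "des (ins t p) + (if 0 < b \<and> c < b \<and> 0 < c then 1 else 0) + (if 0 < c \<and> d < c \<and> 0 < d then 1 else 0)
     = des t + (if 0 < b \<and> 1 < sh b then 1 else 0) + (if sh c < 1 \<and> 0 < sh c then 1 else 0)
       + (if 0 < c \<and> sh d < sh c \<and> 0 < sh d then 1 else 0)" (is ?D)
proof -
  have pt: "pos t" using assms(1) by (rule perms_pos)
  have lt: "length t = m" using assms(1) by (rule perms_len)
  have pi: "pos (ins t p)" using ins_perms[OF assms(1,2)] by (rule perms_pos)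
  have pl: "p \<le> length t" using lt assms(2) by simp
  note L = lc_ins[OF pt pl]
  show ?V using L[of "\<lambda>a b c. b < a \<and> b < c"] V_lc[OF pt] V_lc[OF pi]
    unfolding a_def b_def c_def d_def hb_t by simp
  show ?W using L[of "\<lambda>a b c. a < b \<and> c < b"] W_lc[OF pt] W_lc[OF pi]
    unfolding a_def b_def c_def d_def hb_t by simp
  show ?L using L[of "\<lambda>a b c. a < b \<and> b < c"] lda_lc[OF pt] lda_lc[OF pi]
    unfolding a_def b_def c_def d_def hb_t by simp
  show ?R using L[of "\<lambda>a b c. b < a \<and> c < b"] rdd_lc[OF pt] rdd_lc[OF pi]
    unfolding a_def b_def c_def d_def hb_t by simp
  show ?A using L[of "\<lambda>a b c. b < c"] asc_lc[OF pt] asc_lc[OF pi]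
    unfolding a_def b_def c_def d_def hb_t by simp
  show ?D using L[of "\<lambda>a b c. c < b \<and> 0 < c"] des_lc[OF pt] des_lc[OF pi]
    unfolding a_def b_def c_def d_def hb_t by simp
qed


lemma ent_perm_pos: "t \<in> perms m \<Longrightarrow> 1 \<le> i \<Longrightarrow> i \<le> m \<Longrightarrow> 0 < ent t i"
  using ent_pos[OF perms_pos] perms_len by metis

lemma ent_perm_out: "t \<in> perms m \<Longrightarrow> m < i \<Longrightarrow> ent t i = 0"
  using perms_len by (auto simp: ent_def)

lemma sum_if_const:
  "finite I \<Longrightarrow> (\<Sum>p\<in>I. if P p then x else 0) = of_nat (card {p \<in> I. P p}) * (x :: 'a::comm_ring_1)"
  by (simp add: sum.inter_filter[symmetric])

context
  fixes t :: "nat list" and m :: nat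
  assumes tp: "t \<in> perms m"
begin

abbreviation "e \<equiv> ent t"

lemma int_facts:
  assumes "1 \<le> p" "p < m"
  shows "0 < e p" "0 < e (Suc p)" "e p \<noteq> e (Suc p)" "e (p - 1) \<noteq> e p" "e (Suc p) \<noteq> e (Suc (Suc p))"
proof -
  show bp: "0 < e p" using ent_perm_pos[OF tp] assms by simp
  show cp: "0 < e (Suc p)" using ent_perm_pos[OF tp] assms by simp
  show "e p \<noteq> e (Suc p)" using perms_ent_inj[OF tp, of p "Suc p"] assms by auto
  show "e (p - 1) \<noteq> e p"
  proof (cases "p = 1")
    case True then show ?thesis using bp by simp
  next
    case False
    then have p2: "2 \<le> p" using assms by simp
    show ?thesis
    proof
      assume eq: "e (p - 1) = e p"
      have "p - 1 = p" using perms_ent_inj[OF tp, of "p - 1" p] eq p2 assms by simp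
      then show False using assms by simp
    qed
  qed
  show "e (Suc p) \<noteq> e (Suc (Suc p))"
  proof (cases "Suc p < m")
    case False then show ?thesis using cp ent_perm_out[OF tp, of "Suc (Suc p)"] by simp
  next
    case True then show ?thesis using perms_ent_inj[OF tp, of "Suc p" "Suc (Suc p)"] assms by auto
  qed
qed

lemma cls1:
  assumes "1 \<le> p" "p < m" "e p < e (Suc p)" "e p < e (p - 1)"
  shows "Vst (ins t p) = Vst t \<and> Wst (ins t p) = Wst t \<and> lda (ins t p) = lda t \<and> rdd (ins t p) = Suc (rdd t)"
  using stat_ins[OF tp, of p] int_facts[OF assms(1,2)] assms by auto

lemma cls2:
  assumes "1 \<le> p" "p < m" "e p < e (Suc p)" "e (p - 1) < e p"
  shows "Vst (ins t p) = Suc (Vst t) \<and> Wst (ins t p) = Suc (Wst t) \<and> lda (ins t p) = lda t - 1 \<and> rdd (ins t p) = rdd t"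
  using stat_ins[OF tp, of p] int_facts[OF assms(1,2)] assms by auto

lemma cls3:
  assumes "1 \<le> p" "p < m" "e (Suc p) < e p" "e (Suc p) < e (Suc (Suc p))"
  shows "Vst (ins t p) = Vst t \<and> Wst (ins t p) = Wst t \<and> lda (ins t p) = Suc (lda t) \<and> rdd (ins t p) = rdd t"
  using stat_ins[OF tp, of p] int_facts[OF assms(1,2)] assms by auto

lemma cls4:
  assumes "1 \<le> p" "p < m" "e (Suc p) < e p" "e (Suc (Suc p)) < e (Suc p)"
  shows "Vst (ins t p) = Suc (Vst t) \<and> Wst (ins t p) = Suc (Wst t) \<and> lda (ins t p) = lda t \<and> rdd (ins t p) = rdd t - 1"
  using stat_ins[OF tp, of p] int_facts[OF assms(1,2)] assms by auto

lemma clsA1: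
  assumes "1 \<le> p" "p < m" "e p < e (Suc p)"
  shows "asc (ins t p) = asc t \<and> des (ins t p) = Suc (des t)"
  using stat_ins[OF tp, of p] int_facts[OF assms(1,2)] assms by auto

lemma clsA2:
  assumes "1 \<le> p" "p < m" "e (Suc p) < e p"
  shows "asc (ins t p) = Suc (asc t) \<and> des (ins t p) = des t"
  using stat_ins[OF tp, of p] int_facts[OF assms(1,2)] assms by auto

lemma cls_front:
  assumes "1 \<le> m"
  shows "Vst (ins t 0) = Vst t \<and> Wst (ins t 0) = Wst t \<and> lda (ins t 0) = Suc (lda t) \<and> rdd (ins t 0) = rdd t
     \<and> asc (ins t 0) = Suc (asc t) \<and> des (ins t 0) = des t"
proof -
  have c: "0 < e 1" using ent_perm_pos[OF tp] assms by simp
  have cd: "e 1 \<noteq> e 2"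
  proof (cases "2 \<le> m")
    case False then show ?thesis using c ent_perm_out[OF tp, of 2] by simp
  next
    case True then show ?thesis using perms_ent_inj[OF tp, of 1 2] by auto
  qed
  show ?thesis using stat_ins[OF tp, of 0] c cd assms by (auto simp: numeral_2_eq_2)
qed

lemma cls_end:
  assumes "1 \<le> m"
  shows "Vst (ins t m) = Vst t \<and> Wst (ins t m) = Wst t \<and> lda (ins t m) = lda t \<and> rdd (ins t m) = Suc (rdd t)
     \<and> asc (ins t m) = asc t \<and> des (ins t m) = Suc (des t)"
proof -
  have b: "0 < e m" using ent_perm_pos[OF tp] assms by simp
  have c: "e (Suc m) = 0" "e (Suc (Suc m)) = 0" using ent_perm_out[OF tp] by auto
  have ab: "e (m - 1) \<noteq> e m"
  proof (cases "m = 1")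
    case True then show ?thesis using b by simp
  next
    case False
    then have p2: "2 \<le> m" using assms by simp
    show ?thesis
    proof
      assume eq: "e (m - 1) = e m"
      have "m - 1 = m" using perms_ent_inj[OF tp, of "m - 1" m] eq p2 assms by simp
      then show False using assms by simp
    qed
  qed
  show ?thesis using stat_ins[OF tp, of m] b c ab by auto
qed

end


lemma card_C1: "t \<in> perms m \<Longrightarrow> card {p \<in> {1..<m}. ent t p < ent t (Suc p) \<and> ent t p < ent t (p - 1)} = Vst t"
  unfolding Vst_def using perms_len[of t m]
  by (intro arg_cong[where f = card]) (auto dest: ent_gt)

lemma card_C2: "t \<in> perms m \<Longrightarrow> card {p \<in> {1..<m}. ent t p < ent t (Suc p) \<and> ent t (p - 1) < ent t p} = lda t"
  unfolding lda_def using perms_len[of t m]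
  by (intro arg_cong[where f = card]) auto

lemma card_C3: "t \<in> perms m \<Longrightarrow> card {p \<in> {1..<m}. ent t (Suc p) < ent t p \<and> ent t (Suc p) < ent t (Suc (Suc p))} = Vst t"
proof -
  assume tp: "t \<in> perms m"
  have lt: "length t = m" using perms_len[OF tp] .
  have "{i \<in> {1<..<length t}. ent t i < ent t (i - 1) \<and> ent t i < ent t (i + 1)}
     = Suc ` {p \<in> {1..<m}. ent t (Suc p) < ent t p \<and> ent t (Suc p) < ent t (Suc (Suc p))}"
  proof (intro set_eqI iffI)
    fix i assume i: "i \<in> {i \<in> {1<..<length t}. ent t i < ent t (i - 1) \<and> ent t i < ent t (i + 1)}"
    then have "i = Suc (i - 1)" "i - 1 \<in> {p \<in> {1..<m}. ent t (Suc p) < ent t p \<and> ent t (Suc p) < ent t (Suc (Suc p))}"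
      using lt by auto
    then show "i \<in> Suc ` {p \<in> {1..<m}. ent t (Suc p) < ent t p \<and> ent t (Suc p) < ent t (Suc (Suc p))}"
      by (rule image_eqI)
  next
    fix i assume "i \<in> Suc ` {p \<in> {1..<m}. ent t (Suc p) < ent t p \<and> ent t (Suc p) < ent t (Suc (Suc p))}"
    then obtain p where ip: "i = Suc p" and pp: "p \<in> {p \<in> {1..<m}. ent t (Suc p) < ent t p \<and> ent t (Suc p) < ent t (Suc (Suc p))}"
      by (rule imageE)
    then have p: "i = Suc p" "1 \<le> p" "p < m" "ent t (Suc p) < ent t p" "ent t (Suc p) < ent t (Suc (Suc p))"
      by simp_all
    then have "Suc (Suc p) \<le> length t" using ent_gt[of t "Suc p" "Suc (Suc p)"] by simp
    then show "i \<in> {i \<in> {1<..<length t}. ent t i < ent t (i - 1) \<and> ent t i < ent t (i + 1)}"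
      using p by auto
  qed
  then show ?thesis unfolding Vst_def by (simp add: card_image)
qed

lemma card_C4: "t \<in> perms m \<Longrightarrow> card {p \<in> {1..<m}. ent t (Suc p) < ent t p \<and> ent t (Suc (Suc p)) < ent t (Suc p)} = rdd t"
proof -
  assume tp: "t \<in> perms m"
  have lt: "length t = m" using perms_len[OF tp] .
  have "{i \<in> {1<..length t}. ent t i < ent t (i - 1) \<and> ent t (i + 1) < ent t i}
     = Suc ` {p \<in> {1..<m}. ent t (Suc p) < ent t p \<and> ent t (Suc (Suc p)) < ent t (Suc p)}"
  proof (intro set_eqI iffI)
    fix i assume i: "i \<in> {i \<in> {1<..length t}. ent t i < ent t (i - 1) \<and> ent t (i + 1) < ent t i}"
    then have "i = Suc (i - 1)" "i - 1 \<in> {p \<in> {1..<m}. ent t (Suc p) < ent t p \<and> ent t (Suc (Suc p)) < ent t (Suc p)}"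
      using lt by auto
    then show "i \<in> Suc ` {p \<in> {1..<m}. ent t (Suc p) < ent t p \<and> ent t (Suc (Suc p)) < ent t (Suc p)}"
      by (rule image_eqI)
  next
    fix i assume "i \<in> Suc ` {p \<in> {1..<m}. ent t (Suc p) < ent t p \<and> ent t (Suc (Suc p)) < ent t (Suc p)}"
    then obtain p where ip: "i = Suc p" and pp: "p \<in> {p \<in> {1..<m}. ent t (Suc p) < ent t p \<and> ent t (Suc (Suc p)) < ent t (Suc p)}"
      by (rule imageE)
    then show "i \<in> {i \<in> {1<..length t}. ent t i < ent t (i - 1) \<and> ent t (i + 1) < ent t i}"
      using lt by simp
  qed
  then show ?thesis unfolding rdd_def by (simp add: card_image)
qed

lemma card_asc: "t \<in> perms m \<Longrightarrow> card {p \<in> {1..<m}. ent t p < ent t (Suc p)} = asc t"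
  unfolding asc_def using perms_len[of t m] by simp

lemma card_des: "t \<in> perms m \<Longrightarrow> card {p \<in> {1..<m}. ent t (Suc p) < ent t p} = des t"
  unfolding des_def using perms_len[of t m] by simp


lemma sumP_int:
  fixes g :: "nat \<Rightarrow> nat \<Rightarrow> nat \<Rightarrow> nat \<Rightarrow> 'a::comm_ring_1"
  assumes tp: "t \<in> perms m"
  shows "(\<Sum>p\<in>{1..<m}. g (Vst (ins t p)) (Wst (ins t p)) (lda (ins t p)) (rdd (ins t p)))
    = of_nat (Vst t) * g (Vst t) (Wst t) (lda t) (Suc (rdd t))
    + of_nat (lda t) * g (Suc (Vst t)) (Suc (Wst t)) (lda t - 1) (rdd t)
    + of_nat (Vst t) * g (Vst t) (Wst t) (Suc (lda t)) (rdd t)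
    + of_nat (rdd t) * g (Suc (Vst t)) (Suc (Wst t)) (lda t) (rdd t - 1)"
proof -
  define C1 where "C1 p \<longleftrightarrow> ent t p < ent t (Suc p) \<and> ent t p < ent t (p - 1)" for p
  define C2 where "C2 p \<longleftrightarrow> ent t p < ent t (Suc p) \<and> ent t (p - 1) < ent t p" for p
  define C3 where "C3 p \<longleftrightarrow> ent t (Suc p) < ent t p \<and> ent t (Suc p) < ent t (Suc (Suc p))" for p
  define C4 where "C4 p \<longleftrightarrow> ent t (Suc p) < ent t p \<and> ent t (Suc (Suc p)) < ent t (Suc p)" for p
  define k1 where "k1 = g (Vst t) (Wst t) (lda t) (Suc (rdd t))"
  define k2 where "k2 = g (Suc (Vst t)) (Suc (Wst t)) (lda t - 1) (rdd t)"
  define k3 where "k3 = g (Vst t) (Wst t) (Suc (lda t)) (rdd t)"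
  define k4 where "k4 = g (Suc (Vst t)) (Suc (Wst t)) (lda t) (rdd t - 1)"
  have pw: "g (Vst (ins t p)) (Wst (ins t p)) (lda (ins t p)) (rdd (ins t p))
      = (if C1 p then k1 else 0) + (if C2 p then k2 else 0) + (if C3 p then k3 else 0) + (if C4 p then k4 else 0)"
    if p: "p \<in> {1..<m}" for p
  proof -
    have p1: "1 \<le> p" "p < m" using p by auto
    note F = int_facts[OF tp p1]
    show ?thesis
    proof (cases "ent t p < ent t (Suc p)")
      case True
      then have n34: "\<not> C3 p" "\<not> C4 p" unfolding C3_def C4_def by auto
      show ?thesis
      proof (cases "ent t p < ent t (p - 1)")
        case True
        then have "C1 p" "\<not> C2 p" using \<open>ent t p < ent t (Suc p)\<close> unfolding C1_def C2_def by auto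
        then show ?thesis using cls1[OF tp p1 \<open>ent t p < ent t (Suc p)\<close> True] n34 by (simp add: k1_def)
      next
        case False
        then have lt: "ent t (p - 1) < ent t p" using F by auto
        then have "C2 p" "\<not> C1 p" using \<open>ent t p < ent t (Suc p)\<close> unfolding C1_def C2_def by auto
        then show ?thesis using cls2[OF tp p1 \<open>ent t p < ent t (Suc p)\<close> lt] n34 by (simp add: k2_def)
      qed
    next
      case False
      then have cb: "ent t (Suc p) < ent t p" using F by auto
      then have n12: "\<not> C1 p" "\<not> C2 p" unfolding C1_def C2_def by auto
      show ?thesis
      proof (cases "ent t (Suc p) < ent t (Suc (Suc p))")
        case True
        then have "C3 p" "\<not> C4 p" using cb unfolding C3_def C4_def by auto
        then show ?thesis using cls3[OF tp p1 cb True] n12 by (simp add: k3_def)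
      next
        case False
        then have lt: "ent t (Suc (Suc p)) < ent t (Suc p)" using F by auto
        then have "C4 p" "\<not> C3 p" using cb unfolding C3_def C4_def by auto
        then show ?thesis using cls4[OF tp p1 cb lt] n12 by (simp add: k4_def)
      qed
    qed
  qed
  have "(\<Sum>p\<in>{1..<m}. g (Vst (ins t p)) (Wst (ins t p)) (lda (ins t p)) (rdd (ins t p)))
     = (\<Sum>p\<in>{1..<m}. (if C1 p then k1 else 0) + (if C2 p then k2 else 0) + (if C3 p then k3 else 0) + (if C4 p then k4 else 0))"
    by (rule sum.cong) (simp_all add: pw)
  also have "\<dots> = (\<Sum>p\<in>{1..<m}. if C1 p then k1 else 0) + (\<Sum>p\<in>{1..<m}. if C2 p then k2 else 0)
      + (\<Sum>p\<in>{1..<m}. if C3 p then k3 else 0) + (\<Sum>p\<in>{1..<m}. if C4 p then k4 else 0)"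
    by (simp add: sum.distrib)
  also have "\<dots> = of_nat (Vst t) * k1 + of_nat (lda t) * k2 + of_nat (Vst t) * k3 + of_nat (rdd t) * k4"
    unfolding sum_if_const[OF finite_atLeastLessThan]
    using card_C1[OF tp] card_C2[OF tp] card_C3[OF tp] card_C4[OF tp]
    unfolding C1_def C2_def C3_def C4_def by simp
  finally show ?thesis unfolding k1_def k2_def k3_def k4_def .
qed

lemma sumA_int:
  fixes h :: "nat \<Rightarrow> nat \<Rightarrow> 'a::comm_ring_1"
  assumes tp: "t \<in> perms m"
  shows "(\<Sum>p\<in>{1..<m}. h (asc (ins t p)) (des (ins t p)))
    = of_nat (asc t) * h (asc t) (Suc (des t)) + of_nat (des t) * h (Suc (asc t)) (des t)"
proof -
  define C1 where "C1 p \<longleftrightarrow> ent t p < ent t (Suc p)" for p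
  define C2 where "C2 p \<longleftrightarrow> ent t (Suc p) < ent t p" for p
  define k1 where "k1 = h (asc t) (Suc (des t))"
  define k2 where "k2 = h (Suc (asc t)) (des t)"
  have pw: "h (asc (ins t p)) (des (ins t p)) = (if C1 p then k1 else 0) + (if C2 p then k2 else 0)"
    if p: "p \<in> {1..<m}" for p
  proof -
    have p1: "1 \<le> p" "p < m" using p by auto
    note F = int_facts[OF tp p1]
    show ?thesis
    proof (cases "ent t p < ent t (Suc p)")
      case True
      then show ?thesis using clsA1[OF tp p1 True] unfolding C1_def C2_def k1_def by auto
    next
      case False
      then have cb: "ent t (Suc p) < ent t p" using F by auto
      then show ?thesis using clsA2[OF tp p1 cb] unfolding C1_def C2_def k2_def by auto
    qed
  qed
  have "(\<Sum>p\<in>{1..<m}. h (asc (ins t p)) (des (ins t p)))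
     = (\<Sum>p\<in>{1..<m}. (if C1 p then k1 else 0) + (if C2 p then k2 else 0))"
    by (rule sum.cong) (simp_all add: pw)
  also have "\<dots> = (\<Sum>p\<in>{1..<m}. if C1 p then k1 else 0) + (\<Sum>p\<in>{1..<m}. if C2 p then k2 else 0)"
    by (simp add: sum.distrib)
  also have "\<dots> = of_nat (asc t) * k1 + of_nat (des t) * k2"
    unfolding sum_if_const[OF finite_atLeastLessThan]
    using card_asc[OF tp] card_des[OF tp] unfolding C1_def C2_def by simp
  finally show ?thesis unfolding k1_def k2_def .
qed

lemma split_atMost:
  assumes "1 \<le> (m::nat)"
  shows "(\<Sum>p\<le>m. F p) = F 0 + F m + (\<Sum>p\<in>{1..<m}. F p)"
proof -
  have "{..m} = insert 0 (insert m {1..<m})" using assms by auto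
  then show ?thesis using assms by (simp add: algebra_simps)
qed

lemma sum_P:
  fixes g :: "nat \<Rightarrow> nat \<Rightarrow> nat \<Rightarrow> nat \<Rightarrow> 'a::comm_ring_1"
  assumes tp: "t \<in> perms m" and m1: "1 \<le> m"
  shows "(\<Sum>p\<le>m. \<alpha> ^ (LRmax (ins t p) - 1) * \<beta> ^ (RLmax (ins t p) - 1) *
           g (Vst (ins t p)) (Wst (ins t p)) (lda (ins t p)) (rdd (ins t p)))
    = \<alpha> ^ (LRmax t - 1) * \<beta> ^ (RLmax t - 1) * S4 \<alpha> \<beta> g (Vst t) (Wst t) (lda t) (rdd t)"
proof -
  define c0 where "c0 = \<alpha> ^ (LRmax t - 1) * \<beta> ^ (RLmax t - 1)"
  have L1: "1 \<le> LRmax t" and R1: "1 \<le> RLmax t" using LR_ge1[OF tp m1] RL_ge1[OF tp m1] by auto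
  have f0: "\<alpha> ^ (LRmax (ins t 0) - 1) * \<beta> ^ (RLmax (ins t 0) - 1) *
           g (Vst (ins t 0)) (Wst (ins t 0)) (lda (ins t 0)) (rdd (ins t 0))
      = c0 * (\<alpha> * g (Vst t) (Wst t) (Suc (lda t)) (rdd t))"
  proof -
    have "LRmax (ins t 0) - 1 = Suc (LRmax t - 1)" using LR_ins[OF tp m1, of 0] L1 by simp
    moreover have "RLmax (ins t 0) = RLmax t" using RL_ins[OF tp, of 0] m1 by simp
    ultimately show ?thesis using cls_front[OF tp m1] by (simp add: c0_def algebra_simps)
  qed
  have fm: "\<alpha> ^ (LRmax (ins t m) - 1) * \<beta> ^ (RLmax (ins t m) - 1) *
           g (Vst (ins t m)) (Wst (ins t m)) (lda (ins t m)) (rdd (ins t m))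
      = c0 * (\<beta> * g (Vst t) (Wst t) (lda t) (Suc (rdd t)))"
  proof -
    have "RLmax (ins t m) - 1 = Suc (RLmax t - 1)" using RL_ins[OF tp, of m] R1 by simp
    moreover have "LRmax (ins t m) = LRmax t" using LR_ins[OF tp m1, of m] m1 by simp
    ultimately show ?thesis using cls_end[OF tp m1] by (simp add: c0_def algebra_simps)
  qed
  have fi: "(\<Sum>p\<in>{1..<m}. \<alpha> ^ (LRmax (ins t p) - 1) * \<beta> ^ (RLmax (ins t p) - 1) *
           g (Vst (ins t p)) (Wst (ins t p)) (lda (ins t p)) (rdd (ins t p)))
      = c0 * (\<Sum>p\<in>{1..<m}. g (Vst (ins t p)) (Wst (ins t p)) (lda (ins t p)) (rdd (ins t p)))"
    unfolding sum_distrib_left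
  proof (rule sum.cong)
    fix p assume "p \<in> {1..<m}"
    then have "LRmax (ins t p) = LRmax t" "RLmax (ins t p) = RLmax t"
      using LR_ins[OF tp m1, of p] RL_ins[OF tp, of p] by auto
    then show "\<alpha> ^ (LRmax (ins t p) - 1) * \<beta> ^ (RLmax (ins t p) - 1) *
           g (Vst (ins t p)) (Wst (ins t p)) (lda (ins t p)) (rdd (ins t p))
      = c0 * g (Vst (ins t p)) (Wst (ins t p)) (lda (ins t p)) (rdd (ins t p))" by (simp add: c0_def)
  qed simp
  show ?thesis
    unfolding split_atMost[OF m1] f0 fm fi sumP_int[OF tp] c0_def[symmetric]
    by (simp add: S4_def algebra_simps)
qed

lemma sum_A:
  fixes h :: "nat \<Rightarrow> nat \<Rightarrow> 'a::comm_ring_1"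
  assumes tp: "t \<in> perms m" and m1: "1 \<le> m"
  shows "(\<Sum>p\<le>m. \<alpha> ^ (LRmax (ins t p) - 1) * \<beta> ^ (RLmax (ins t p) - 1) * h (asc (ins t p)) (des (ins t p)))
    = \<alpha> ^ (LRmax t - 1) * \<beta> ^ (RLmax t - 1) * S2 \<alpha> \<beta> h (asc t) (des t)"
proof -
  define c0 where "c0 = \<alpha> ^ (LRmax t - 1) * \<beta> ^ (RLmax t - 1)"
  have L1: "1 \<le> LRmax t" and R1: "1 \<le> RLmax t" using LR_ge1[OF tp m1] RL_ge1[OF tp m1] by auto
  have f0: "\<alpha> ^ (LRmax (ins t 0) - 1) * \<beta> ^ (RLmax (ins t 0) - 1) * h (asc (ins t 0)) (des (ins t 0))
      = c0 * (\<alpha> * h (Suc (asc t)) (des t))"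
  proof -
    have "LRmax (ins t 0) - 1 = Suc (LRmax t - 1)" using LR_ins[OF tp m1, of 0] L1 by simp
    moreover have "RLmax (ins t 0) = RLmax t" using RL_ins[OF tp, of 0] m1 by simp
    ultimately show ?thesis using cls_front[OF tp m1] by (simp add: c0_def algebra_simps)
  qed
  have fm: "\<alpha> ^ (LRmax (ins t m) - 1) * \<beta> ^ (RLmax (ins t m) - 1) * h (asc (ins t m)) (des (ins t m))
      = c0 * (\<beta> * h (asc t) (Suc (des t)))"
  proof -
    have "RLmax (ins t m) - 1 = Suc (RLmax t - 1)" using RL_ins[OF tp, of m] R1 by simp
    moreover have "LRmax (ins t m) = LRmax t" using LR_ins[OF tp m1, of m] m1 by simp
    ultimately show ?thesis using cls_end[OF tp m1] by (simp add: c0_def algebra_simps)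
  qed
  have fi: "(\<Sum>p\<in>{1..<m}. \<alpha> ^ (LRmax (ins t p) - 1) * \<beta> ^ (RLmax (ins t p) - 1) * h (asc (ins t p)) (des (ins t p)))
      = c0 * (\<Sum>p\<in>{1..<m}. h (asc (ins t p)) (des (ins t p)))"
    unfolding sum_distrib_left
  proof (rule sum.cong)
    fix p assume "p \<in> {1..<m}"
    then have "LRmax (ins t p) = LRmax t" "RLmax (ins t p) = RLmax t"
      using LR_ins[OF tp m1, of p] RL_ins[OF tp, of p] by auto
    then show "\<alpha> ^ (LRmax (ins t p) - 1) * \<beta> ^ (RLmax (ins t p) - 1) * h (asc (ins t p)) (des (ins t p))
      = c0 * h (asc (ins t p)) (des (ins t p))" by (simp add: c0_def)
  qed simp
  show ?thesis
    unfolding split_atMost[OF m1] f0 fm fi sumA_int[OF tp] c0_def[symmetric]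
    by (simp add: S2_def algebra_simps)
qed


definition TP :: "'a::comm_ring_1 \<Rightarrow> 'a \<Rightarrow> (nat \<Rightarrow> nat \<Rightarrow> nat \<Rightarrow> nat \<Rightarrow> 'a) \<Rightarrow> nat \<Rightarrow> 'a" where
  "TP \<alpha> \<beta> g m = (\<Sum>s\<in>perms m. \<alpha> ^ (LRmax s - 1) * \<beta> ^ (RLmax s - 1) * g (Vst s) (Wst s) (lda s) (rdd s))"

definition TA :: "'a::comm_ring_1 \<Rightarrow> 'a \<Rightarrow> (nat \<Rightarrow> nat \<Rightarrow> 'a) \<Rightarrow> nat \<Rightarrow> 'a" where
  "TA \<alpha> \<beta> h m = (\<Sum>s\<in>perms m. \<alpha> ^ (LRmax s - 1) * \<beta> ^ (RLmax s - 1) * h (asc s) (des s))"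

lemma TP_Suc: assumes "1 \<le> m" shows "TP \<alpha> \<beta> g (Suc m) = TP \<alpha> \<beta> (S4 \<alpha> \<beta> g) m"
  unfolding TP_def sum_perms_Suc
proof (rule sum.cong[OF refl])
  fix t assume "t \<in> perms m"
  then show "(\<Sum>p\<le>m. \<alpha> ^ (LRmax (ins t p) - 1) * \<beta> ^ (RLmax (ins t p) - 1) *
           g (Vst (ins t p)) (Wst (ins t p)) (lda (ins t p)) (rdd (ins t p)))
    = \<alpha> ^ (LRmax t - 1) * \<beta> ^ (RLmax t - 1) * S4 \<alpha> \<beta> g (Vst t) (Wst t) (lda t) (rdd t)"
    using sum_P assms by blast
qed

lemma TA_Suc: assumes "1 \<le> m" shows "TA \<alpha> \<beta> h (Suc m) = TA \<alpha> \<beta> (S2 \<alpha> \<beta> h) m"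
  unfolding TA_def sum_perms_Suc
proof (rule sum.cong[OF refl])
  fix t assume "t \<in> perms m"
  then show "(\<Sum>p\<le>m. \<alpha> ^ (LRmax (ins t p) - 1) * \<beta> ^ (RLmax (ins t p) - 1) * h (asc (ins t p)) (des (ins t p)))
    = \<alpha> ^ (LRmax t - 1) * \<beta> ^ (RLmax t - 1) * S2 \<alpha> \<beta> h (asc t) (des t)"
    using sum_A assms by blast
qed

lemma perms_1: "perms 1 = {[1]}"
proof
  show "{[1]} \<subseteq> perms 1" by (simp add: perms_def)
next
  show "perms 1 \<subseteq> {[1]}"
  proof
    fix s assume s: "s \<in> perms 1"
    then have "length s = 1" by (rule perms_len)
    then obtain x where "s = [x]" by (cases s) auto
    moreover have "set s = {1}" using s by (simp add: perms_def)
    ultimately show "s \<in> {[1]}" by simp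
  qed
qed

lemma perms_Suc0: "perms (Suc 0) = {[Suc 0]}" using perms_1 by simp

lemma stats_1: "Vst [1] = 0" "Wst [1] = 1" "lda [1] = 0" "rdd [1] = 0" "asc [1] = 0" "des [1] = 0"
  "LRmax [1] = 1" "RLmax [1] = 1"
proof -
  have p: "pos [1]" by (simp add: pos_def)
  show "Vst [1] = 0" by (simp add: Vst_def)
  show "lda [1] = 0" by (simp add: lda_def)
  show "rdd [1] = 0" by (simp add: rdd_def)
  show "asc [1] = 0" by (simp add: asc_def)
  show "des [1] = 0" by (simp add: des_def)
  have "{i \<in> {1..length [1::nat]}. ent [1] (i - 1) < ent [1] i \<and> ent [1] (i + 1) < ent [1] i} = {1}"
    by (auto simp: ent_def)
  then show "Wst [1] = 1" by (simp add: Wst_def)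
  show "LRmax [1] = 1" using LR_lrm[OF p] by simp
  show "RLmax [1] = 1" using RL_rlm by simp
qed

lemma TP_pow: "TP \<alpha> \<beta> g (Suc n) = (S4 \<alpha> \<beta> ^^ n) g 0 1 0 0"
proof (induction n arbitrary: g)
  case 0 then show ?case by (simp add: TP_def perms_Suc0 stats_1[simplified])
next
  case (Suc n)
  have "TP \<alpha> \<beta> g (Suc (Suc n)) = TP \<alpha> \<beta> (S4 \<alpha> \<beta> g) (Suc n)" by (rule TP_Suc) simp
  also have "\<dots> = (S4 \<alpha> \<beta> ^^ n) (S4 \<alpha> \<beta> g) 0 1 0 0" by (rule Suc.IH)
  also have "\<dots> = (S4 \<alpha> \<beta> ^^ Suc n) g 0 1 0 0" by (simp only: funpow_Suc_right o_apply)
  finally show ?case .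
qed

lemma TA_pow: "TA \<alpha> \<beta> h (Suc n) = (S2 \<alpha> \<beta> ^^ n) h 0 0"
proof (induction n arbitrary: h)
  case 0 then show ?case by (simp add: TA_def perms_Suc0 stats_1[simplified])
next
  case (Suc n)
  have "TA \<alpha> \<beta> h (Suc (Suc n)) = TA \<alpha> \<beta> (S2 \<alpha> \<beta> h) (Suc n)" by (rule TA_Suc) simp
  also have "\<dots> = (S2 \<alpha> \<beta> ^^ n) (S2 \<alpha> \<beta> h) 0 0" by (rule Suc.IH)
  also have "\<dots> = (S2 \<alpha> \<beta> ^^ Suc n) h 0 0" by (simp only: funpow_Suc_right o_apply)
  finally show ?case .
qed

lemma Ppoly_TP: fixes u1 u2 u3 u4 \<alpha> \<beta> :: "'a::comm_ring_1" shows "Ppoly n u1 u2 u3 u4 \<alpha> \<beta> = TP \<alpha> \<beta> (\<lambda>v w l r. u1 ^ v * u2 ^ (w - 1) * u3 ^ r * u4 ^ l) (Suc n)"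
  unfolding Ppoly_def TP_def by (intro sum.cong) (simp_all add: algebra_simps)

lemma Apoly_TA: fixes x y \<alpha> \<beta> :: "'a::comm_ring_1" shows "Apoly n x y \<alpha> \<beta> = TA \<alpha> \<beta> (\<lambda>a d. x ^ a * y ^ d) (Suc n)"
  unfolding Apoly_def TA_def by (intro sum.cong) (simp_all add: algebra_simps)

theorem theorem6p1:
  fixes u1 u2 u3 u4 \<alpha> \<beta> x y :: "'a::field_char_0"
  assumes "x + y = u3 + u4" and "x * y = u1 * u2"
  shows "Ppoly n u1 u2 u3 u4 \<alpha> \<beta> =
    (\<Sum>k=0..n. of_nat (n choose k) * Apoly k x y ((\<alpha> + \<beta>) / 2) ((\<alpha> + \<beta>) / 2)
       * ((\<beta> - \<alpha>) ^ (n - k) * (u3 - u4) ^ (n - k) / 2 ^ (n - k)))"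
proof -
  define c where "c = (\<alpha> + \<beta>) / 2"
  define d where "d = (\<beta> - \<alpha>) / 2"
  define mP where "mP = (\<lambda>v w l r. u1 ^ v * u2 ^ (w - 1) * u3 ^ r * u4 ^ l)"
  have ab: "\<alpha> = c - d" "\<beta> = c + d" by (simp_all add: c_def d_def field_simps)
  have K: "Kop mP = (\<lambda>v w l r. (u3 - u4) * mP v w l r)"
    by (intro ext) (simp add: Kop_def mP_def algebra_simps)
  have A: "Apoly k x y c c = (Le c ^^ k) (\<lambda>i j. (u3 + u4) ^ i * (u1 * u2) ^ j) 0 0" for k
  proof -
    have "Apoly k x y c c = (S2 c c ^^ k) (\<lambda>a d. x ^ a * y ^ d) 0 0"
      by (simp add: Apoly_TA TA_pow)
    also have "\<dots> = (Le c ^^ k) (\<lambda>i j. (x + y) ^ i * (x * y) ^ j) 0 0"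
      using lemX[where x=x and y=y and c=c and i=0 and k=k and j=0] by simp
    finally show ?thesis using assms by simp
  qed
  have P: "(S4 c c ^^ k) mP 0 (Suc 0) 0 0 = (Le c ^^ k) (\<lambda>i j. (u3 + u4) ^ i * (u1 * u2) ^ j) 0 0" for k
  proof -
    have "(\<Sum>r\<le>0. of_nat (0 choose r) * (S4 c c ^^ k) mP 0 (Suc 0) (0 - r) r)
        = (Le c ^^ k) (\<lambda>i j. (u3 + u4) ^ i * (u1 * u2) ^ j) 0 0"
      unfolding mP_def by (rule lemU)
    then show ?thesis by simp
  qed
  have "Ppoly n u1 u2 u3 u4 \<alpha> \<beta> = (S4 (c - d) (c + d) ^^ n) mP 0 1 0 0"
    by (simp add: Ppoly_TP TP_pow mP_def ab[symmetric])
  also have "\<dots> = (\<Sum>k\<le>n. of_nat (n choose k) * (d * (u3 - u4)) ^ (n - k) * (S4 c c ^^ k) mP 0 1 0 0)"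
    by (simp add: partI[OF K])
  also have "\<dots> = (\<Sum>k=0..n. of_nat (n choose k) * Apoly k x y c c
       * ((\<beta> - \<alpha>) ^ (n - k) * (u3 - u4) ^ (n - k) / 2 ^ (n - k)))"
    unfolding atLeast0AtMost
  proof (rule sum.cong)
    fix k assume "k \<in> {..n}"
    have "(d * (u3 - u4)) ^ (n - k) = (\<beta> - \<alpha>) ^ (n - k) * (u3 - u4) ^ (n - k) / 2 ^ (n - k)"
      by (simp add: d_def power_mult_distrib power_divide)
    then show "of_nat (n choose k) * (d * (u3 - u4)) ^ (n - k) * (S4 c c ^^ k) mP 0 1 0 0 =
        of_nat (n choose k) * Apoly k x y c c * ((\<beta> - \<alpha>) ^ (n - k) * (u3 - u4) ^ (n - k) / 2 ^ (n - k))"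
      by (simp add: A P)
  qed simp
  finally show ?thesis unfolding c_def .
qed


end
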